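(* Let $G$ be a finite abelian group and let $M$ be a $\hat G$-linear, left inductive monoid. Fix a non-zero idempotent $e\in M$, let $J=\mathcal J_e$ be its $\mathcal J$-class, and let $G_J=eMe\cap J$. Then: (1) If $V\in\mathrm{Rep}(\hat G_J,\hat G)$ is simple, then $$N(V{\uparrow_e}):=\{x\otimes w\in V{\uparrow_e}\mid eM(x\otimes w)=0\}$$ is the unique maximal subrepresentation of $V{\uparrow_e}$; moreover the simple representation $Q(V)=V{\uparrow_e}/N(V{\uparrow_e})$ has apex $J$, and $Q(V){\downarrow_e}\cong V$ in $\mathrm{Rep}(\hat G_J,\hat G)$. (2) If $V\in\mathrm{Rep}(M,\hat G)$ is simple with apex $J$, then $W=V{\downarrow_e}$ is simple in $\mathrm{Rep}(\hat G_J,\hat G)$, and $W{\uparrow_e}/N(W{\uparrow_e})\cong V$ in $\mathrm{Rep}(M,\hat G)$. In particular, there is a bijection between isomorphism classes of simple objects of $\mathrm{Rep}(M,\hat G)$ with apex $J$ and isomorphism classes of simple objects of $\mathrm{Rep}(\hat G_J,\hat G)$.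
   Context: $G$ is a finite abelian group written multiplicatively and $\hat G=G\sqcup\{0\}$ is the pointed abelian group obtained by adjoining an absorbing element $0$. The category $\mathrm{Vect}_{\hat G}$ has as objects finite pointed sets $(V,0_V)$ with an action of the monoid $\hat G$ (with $0v=0_V$, $g0_V=0_V$) such that $G$ acts freely on $V\setminus\{0_V\}$; morphisms $f:V\to W$ are maps with $f(0_V)=0_W$, $f(gv)=gf(v)$, and such that $f(v_1)=f(v_2)\neq0_W$ implies $Gv_1=Gv_2$. Subspaces are $G$-stable subsets containing $0$; quotients are $V/W=(V\setminus W)\cup\{0_V\}$. A $\hat G$-linear monoid is a finite monoid $M$ with absorbing element $0_M$ containing $G$ as a subgroup of units, such that each element of $G$ commutes with every element of $M$ and $G$ acts freely by translation on $M\setminus\{0_M\}$. $\mathrm{Rep}(M,\hat G)$ is the category of objects $V$ of $\mathrm{Vect}_{\hat G}$ with a monoid action of $M$ by morphisms of $\mathrm{Vect}_{\hat G}$ such that $0_M$ acts as the zero map and $g\in G\subseteq M$ acts as the scalar $g$; morphisms are $M$-equivariant morphisms of $\mathrm{Vect}_{\hat G}$. Subrepresentations are $M$-stable subspaces; a representation is simple if it is nonzero and has no subrepresentations besides $\{0\}$ and itself. $\mathrm{Ann}_M(V)=\{x\in M: xV=0\}$. For $a\in M$, $J(a)=MaM$; $a,b$ are $\mathcal J$-equivalent if $J(a)=J(b)$, with class $\mathcal J_a$. A $\mathcal J$-class is regular if it contains an idempotent. $I(a)=\{x\in J(a): MxM\neq J(a)\}$, and the principal factor $P(a)$ is $(J(a)\setminus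 I(a))\cup\{0\}$ with product $xy$ if $xy\in J(a)\setminus I(a)$ and $0$ otherwise. $M$ acts on $P(e)$ ($e$ idempotent) by left translation: $m\cdot x=mx$ if $mx\in J(e)\setminus I(e)$, else $0$. $M$ is left inductive if for every idempotent $e$, $P(e)$ with this left translation action is an object of $\mathrm{Rep}(M,\hat G)$. For a $\mathcal J$-class $J$, $I_J=\{x\in M: J\not\subseteq MxM\}$; a regular $\mathcal J$-class $J$ is the apex of $V\in\mathrm{Rep}(M,\hat G)$ if $\mathrm{Ann}_M(V)=I_J$. For an idempotent $e$ with $J=\mathcal J_e$, $G_J=eMe\cap J$ is a group with identity $e$, and $\hat G_J=G_J\sqcup\{0\}$. $\mathrm{Rep}(\hat G_J,\hat G)$ consists of objects $W$ of $\mathrm{Vect}_{\hat G}$ with an action of $\hat G_J$ by morphisms of $\mathrm{Vect}_{\hat G}$, $e$ acting as identity, $0$ as zero, and $ge$ ($g\in G$) acting as the scalar $g$. $P(e)e=\{xe: x\in P(e)\}$ (products in $P(e)$), stable under left translation by $M$ and right multiplication by $G_J$. For $W\in\mathrm{Rep}(\hat G_J,\hat G)$, induction is $W{\uparrow_e}=P(e)e\otimes_{\hat G_J}W$: the set of pairs $x\otimes w$ ($x\in P(e)e$, $w\in W$) modulo the equivalence relation generated by $x\alpha\otimes w=x\otimes\alpha w$ for $\alpha\in\hat G_J$, $gx\otimes w=x\otimes gw$ for $g\in G$, and $x\otimes 0=0\otimes w=0$, with $M$ acting by $a(x\otimes w)=(ax)\otimes w$. Restriction is $V{\downarrow_e}=eV$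 with the induced action of $\hat G_J$. *)

theory Defs
  imports Main
begin

text \<open>A hat-G-linear monoid: carrier, product, unit, absorbing zero and the
  subgroup G of central units (G is given as a subset of M).\<close>
record 'm lmonoid =
  mcar :: "'m set"
  mmul :: "'m \<Rightarrow> 'm \<Rightarrow> 'm"
  mone :: 'm
  mzer :: 'm
  mgrp :: "'m set"

text \<open>A pointed finite set with an action (by elements of M, resp. of the group G
  or of hat G_J).  For objects of Vect_Ghat only the action of G is used.\<close>
record ('m, 'v) obj =
  rcar :: "'v set"
  rzero :: 'v
  ract :: "'m \<Rightarrow> 'v \<Rightarrow> 'v"

definition Glinear_monoid :: "'m lmonoid \<Rightarrow> bool" where
  "Glinear_monoid M \<longleftrightarrow>
     finite (mcar M) \<and> mone M \<in> mcar M \<and> mzer M \<in> mcar M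
   \<and> (\<forall>x\<in>mcar M. \<forall>y\<in>mcar M. mmul M x y \<in> mcar M)
   \<and> (\<forall>x\<in>mcar M. \<forall>y\<in>mcar M. \<forall>z\<in>mcar M. mmul M (mmul M x y) z = mmul M x (mmul M y z))
   \<and> (\<forall>x\<in>mcar M. mmul M (mone M) x = x \<and> mmul M x (mone M) = x)
   \<and> (\<forall>x\<in>mcar M. mmul M (mzer M) x = mzer M \<and> mmul M x (mzer M) = mzer M)
   \<and> mgrp M \<subseteq> mcar M \<and> mone M \<in> mgrp M
   \<and> (\<forall>g\<in>mgrp M. \<forall>h\<in>mgrp M. mmul M g h \<in> mgrp M)
   \<and> (\<forall>g\<in>mgrp M. \<exists>h\<in>mgrp M. mmul M g h = mone M \<and> mmul M h g = mone M)
   \<and> (\<forall>g\<in>mgrp M. \<forall>x\<in>mcar M. mmul M g x = mmul M x g)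
   \<and> (\<forall>g\<in>mgrp M. \<forall>x\<in>mcar M. x \<noteq> mzer M \<and> mmul M g x = x \<longrightarrow> g = mone M)"

definition vect_obj :: "'m lmonoid \<Rightarrow> ('m, 'v) obj \<Rightarrow> bool" where
  "vect_obj M V \<longleftrightarrow>
     finite (rcar V) \<and> rzero V \<in> rcar V
   \<and> (\<forall>g\<in>mgrp M. \<forall>v\<in>rcar V. ract V g v \<in> rcar V)
   \<and> (\<forall>v\<in>rcar V. ract V (mone M) v = v)
   \<and> (\<forall>g\<in>mgrp M. \<forall>h\<in>mgrp M. \<forall>v\<in>rcar V. ract V (mmul M g h) v = ract V g (ract V h v))
   \<and> (\<forall>g\<in>mgrp M. ract V g (rzero V) = rzero V)
   \<and> (\<forall>g\<in>mgrp M. \<forall>v\<in>rcar V. v \<noteq> rzero V \<and> ract V g v = v \<longrightarrow> g = mone M)"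

definition orbit :: "'m lmonoid \<Rightarrow> ('m, 'v) obj \<Rightarrow> 'v \<Rightarrow> 'v set" where
  "orbit M V v = (\<lambda>g. ract V g v) ` mgrp M"

definition vect_morph :: "'m lmonoid \<Rightarrow> ('m, 'v) obj \<Rightarrow> ('m, 'w) obj \<Rightarrow> ('v \<Rightarrow> 'w) \<Rightarrow> bool" where
  "vect_morph M V W f \<longleftrightarrow>
     (\<forall>v\<in>rcar V. f v \<in> rcar W) \<and> f (rzero V) = rzero W
   \<and> (\<forall>g\<in>mgrp M. \<forall>v\<in>rcar V. f (ract V g v) = ract W g (f v))
   \<and> (\<forall>v1\<in>rcar V. \<forall>v2\<in>rcar V. f v1 = f v2 \<and> f v1 \<noteq> rzero W \<longrightarrow> orbit M V v1 = orbit M V v2)"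

text \<open>The scalar action of g in G is the action of g as element of M
  (this encodes "g in G acts as the scalar g").\<close>
definition rep_M :: "'m lmonoid \<Rightarrow> ('m, 'v) obj \<Rightarrow> bool" where
  "rep_M M V \<longleftrightarrow>
     vect_obj M V
   \<and> (\<forall>m\<in>mcar M. vect_morph M V V (ract V m))
   \<and> (\<forall>m\<in>mcar M. \<forall>n\<in>mcar M. \<forall>v\<in>rcar V. ract V (mmul M m n) v = ract V m (ract V n v))
   \<and> (\<forall>v\<in>rcar V. ract V (mone M) v = v)
   \<and> (\<forall>v\<in>rcar V. ract V (mzer M) v = rzero V)"

definition morph_M :: "'m lmonoid \<Rightarrow> ('m, 'v) obj \<Rightarrow> ('m, 'w) obj \<Rightarrow> ('v \<Rightarrow> 'w) \<Rightarrow> bool" where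
  "morph_M M V W f \<longleftrightarrow> vect_morph M V W f
     \<and> (\<forall>m\<in>mcar M. \<forall>v\<in>rcar V. f (ract V m v) = ract W m (f v))"

definition iso_M :: "'m lmonoid \<Rightarrow> ('m, 'v) obj \<Rightarrow> ('m, 'w) obj \<Rightarrow> bool" where
  "iso_M M V W \<longleftrightarrow> (\<exists>f g. morph_M M V W f \<and> morph_M M W V g
     \<and> (\<forall>v\<in>rcar V. g (f v) = v) \<and> (\<forall>w\<in>rcar W. f (g w) = w))"

definition subrep_M :: "'m lmonoid \<Rightarrow> ('m, 'v) obj \<Rightarrow> 'v set \<Rightarrow> bool" where
  "subrep_M M V S \<longleftrightarrow> S \<subseteq> rcar V \<and> rzero V \<in> S
     \<and> (\<forall>g\<in>mgrp M. \<forall>v\<in>S. ract V g v \<in> S)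
     \<and> (\<forall>m\<in>mcar M. \<forall>v\<in>S. ract V m v \<in> S)"

definition simple_M :: "'m lmonoid \<Rightarrow> ('m, 'v) obj \<Rightarrow> bool" where
  "simple_M M V \<longleftrightarrow> rep_M M V \<and> rcar V \<noteq> {rzero V}
     \<and> (\<forall>S. subrep_M M V S \<longrightarrow> S = {rzero V} \<or> S = rcar V)"

definition Ann :: "'m lmonoid \<Rightarrow> ('m, 'v) obj \<Rightarrow> 'm set" where
  "Ann M V = {x\<in>mcar M. \<forall>v\<in>rcar V. ract V x v = rzero V}"

definition Jideal :: "'m lmonoid \<Rightarrow> 'm \<Rightarrow> 'm set" where
  "Jideal M a = {mmul M (mmul M x a) y | x y. x \<in> mcar M \<and> y \<in> mcar M}"

definition Jclass :: "'m lmonoid \<Rightarrow> 'm \<Rightarrow> 'm set" where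
  "Jclass M a = {x\<in>mcar M. Jideal M x = Jideal M a}"

definition Iideal :: "'m lmonoid \<Rightarrow> 'm \<Rightarrow> 'm set" where
  "Iideal M a = {x\<in>Jideal M a. Jideal M x \<noteq> Jideal M a}"

definition idem :: "'m lmonoid \<Rightarrow> 'm \<Rightarrow> bool" where
  "idem M e \<longleftrightarrow> e \<in> mcar M \<and> mmul M e e = e"

definition is_Jclass :: "'m lmonoid \<Rightarrow> 'm set \<Rightarrow> bool" where
  "is_Jclass M J \<longleftrightarrow> (\<exists>a\<in>mcar M. J = Jclass M a)"

definition regular_Jclass :: "'m lmonoid \<Rightarrow> 'm set \<Rightarrow> bool" where
  "regular_Jclass M J \<longleftrightarrow> is_Jclass M J \<and> (\<exists>e\<in>J. idem M e)"

definition IJ :: "'m lmonoid \<Rightarrow> 'm set \<Rightarrow> 'm set" where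
  "IJ M J = {x\<in>mcar M. \<not> J \<subseteq> Jideal M x}"

definition has_apex :: "'m lmonoid \<Rightarrow> ('m, 'v) obj \<Rightarrow> 'm set \<Rightarrow> bool" where
  "has_apex M V J \<longleftrightarrow> regular_Jclass M J \<and> Ann M V = IJ M J"

definition pmul :: "'m lmonoid \<Rightarrow> 'm \<Rightarrow> 'm \<Rightarrow> 'm \<Rightarrow> 'm" where
  "pmul M a x y = (if mmul M x y \<in> Jideal M a - Iideal M a then mmul M x y else mzer M)"

definition Pobj :: "'m lmonoid \<Rightarrow> 'm \<Rightarrow> ('m, 'm) obj" where
  "Pobj M e = \<lparr>rcar = (Jideal M e - Iideal M e) \<union> {mzer M}, rzero = mzer M,
               ract = (\<lambda>m x. pmul M e m x)\<rparr>"

definition left_inductive :: "'m lmonoid \<Rightarrow> bool" where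
  "left_inductive M \<longleftrightarrow> (\<forall>e. idem M e \<longrightarrow> rep_M M (Pobj M e))"

definition GJ :: "'m lmonoid \<Rightarrow> 'm \<Rightarrow> 'm set" where
  "GJ M e = {mmul M (mmul M e m) e | m. m \<in> mcar M} \<inter> Jclass M e"

definition hatGJ :: "'m lmonoid \<Rightarrow> 'm \<Rightarrow> 'm set" where
  "hatGJ M e = GJ M e \<union> {mzer M}"

text \<open>The underlying object of Vect_Ghat: g in G acts as g e.\<close>
definition scal :: "'m lmonoid \<Rightarrow> 'm \<Rightarrow> ('m, 'v) obj \<Rightarrow> ('m, 'v) obj" where
  "scal M e W = W\<lparr>ract := (\<lambda>g. ract W (mmul M g e))\<rparr>"

definition rep_GJ :: "'m lmonoid \<Rightarrow> 'm \<Rightarrow> ('m, 'v) obj \<Rightarrow> bool" where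
  "rep_GJ M e W \<longleftrightarrow>
     vect_obj M (scal M e W)
   \<and> (\<forall>a\<in>hatGJ M e. vect_morph M (scal M e W) (scal M e W) (ract W a))
   \<and> (\<forall>a\<in>hatGJ M e. \<forall>b\<in>hatGJ M e. \<forall>w\<in>rcar W. ract W (mmul M a b) w = ract W a (ract W b w))
   \<and> (\<forall>w\<in>rcar W. ract W e w = w)
   \<and> (\<forall>w\<in>rcar W. ract W (mzer M) w = rzero W)"

definition morph_GJ :: "'m lmonoid \<Rightarrow> 'm \<Rightarrow> ('m, 'v) obj \<Rightarrow> ('m, 'w) obj \<Rightarrow> ('v \<Rightarrow> 'w) \<Rightarrow> bool" where
  "morph_GJ M e V W f \<longleftrightarrow> vect_morph M (scal M e V) (scal M e W) f
     \<and> (\<forall>a\<in>hatGJ M e. \<forall>v\<in>rcar V. f (ract V a v) = ract W a (f v))"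

definition iso_GJ :: "'m lmonoid \<Rightarrow> 'm \<Rightarrow> ('m, 'v) obj \<Rightarrow> ('m, 'w) obj \<Rightarrow> bool" where
  "iso_GJ M e V W \<longleftrightarrow> (\<exists>f g. morph_GJ M e V W f \<and> morph_GJ M e W V g
     \<and> (\<forall>v\<in>rcar V. g (f v) = v) \<and> (\<forall>w\<in>rcar W. f (g w) = w))"

definition subrep_GJ :: "'m lmonoid \<Rightarrow> 'm \<Rightarrow> ('m, 'v) obj \<Rightarrow> 'v set \<Rightarrow> bool" where
  "subrep_GJ M e W S \<longleftrightarrow> S \<subseteq> rcar W \<and> rzero W \<in> S
     \<and> (\<forall>g\<in>mgrp M. \<forall>w\<in>S. ract (scal M e W) g w \<in> S)
     \<and> (\<forall>a\<in>hatGJ M e. \<forall>w\<in>S. ract W a w \<in> S)"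

definition simple_GJ :: "'m lmonoid \<Rightarrow> 'm \<Rightarrow> ('m, 'v) obj \<Rightarrow> bool" where
  "simple_GJ M e W \<longleftrightarrow> rep_GJ M e W \<and> rcar W \<noteq> {rzero W}
     \<and> (\<forall>S. subrep_GJ M e W S \<longrightarrow> S = {rzero W} \<or> S = rcar W)"

definition PeE :: "'m lmonoid \<Rightarrow> 'm \<Rightarrow> 'm set" where
  "PeE M e = (\<lambda>x. pmul M e x e) ` rcar (Pobj M e)"

text \<open>Generating relation for the tensor product P(e)e \<otimes>_{hat G_J} W.\<close>
definition ind_gen :: "'m lmonoid \<Rightarrow> 'm \<Rightarrow> ('m, 'w) obj \<Rightarrow> (('m \<times> 'w) \<times> ('m \<times> 'w)) set" where
  "ind_gen M e W =
     {((pmul M e x a, w), (x, ract W a w)) | x a w. x \<in> PeE M e \<and> a \<in> hatGJ M e \<and> w \<in> rcar W}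
   \<union> {((mmul M g x, w), (x, ract W (mmul M g e) w)) | x g w. x \<in> PeE M e \<and> g \<in> mgrp M \<and> w \<in> rcar W}
   \<union> {((x, rzero W), (mzer M, w)) | x w. x \<in> PeE M e \<and> w \<in> rcar W}"

definition ind_rel :: "'m lmonoid \<Rightarrow> 'm \<Rightarrow> ('m, 'w) obj \<Rightarrow> (('m \<times> 'w) \<times> ('m \<times> 'w)) set" where
  "ind_rel M e W = (ind_gen M e W \<union> (ind_gen M e W)\<inverse>)\<^sup>* \<inter> ((PeE M e \<times> rcar W) \<times> (PeE M e \<times> rcar W))"

text \<open>W induced up: classes x \<otimes> w, with a (x \<otimes> w) = (a x) \<otimes> w.\<close>
definition ind :: "'m lmonoid \<Rightarrow> 'm \<Rightarrow> ('m, 'w) obj \<Rightarrow> ('m, ('m \<times> 'w) set) obj" where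
  "ind M e W = \<lparr>rcar = (PeE M e \<times> rcar W) // ind_rel M e W,
                rzero = ind_rel M e W `` {(mzer M, rzero W)},
                ract = (\<lambda>a C. ind_rel M e W `` ((\<lambda>(x, w). (pmul M e a x, w)) ` C))\<rparr>"

definition res :: "'m lmonoid \<Rightarrow> 'm \<Rightarrow> ('m, 'v) obj \<Rightarrow> ('m, 'v) obj" where
  "res M e V = \<lparr>rcar = ract V e ` rcar V, rzero = rzero V, ract = ract V\<rparr>"

definition quot :: "('m, 'v) obj \<Rightarrow> 'v set \<Rightarrow> ('m, 'v) obj" where
  "quot V S = \<lparr>rcar = (rcar V - S) \<union> {rzero V}, rzero = rzero V,
               ract = (\<lambda>m v. if ract V m v \<in> S then rzero V else ract V m v)\<rparr>"

definition Nset :: "'m lmonoid \<Rightarrow> 'm \<Rightarrow> ('m, 'v) obj \<Rightarrow> 'v set" where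
  "Nset M e V = {c\<in>rcar V. \<forall>m\<in>mcar M. ract V (mmul M e m) c = rzero V}"

definition Qrep :: "'m lmonoid \<Rightarrow> 'm \<Rightarrow> ('m, 'w) obj \<Rightarrow> ('m, ('m \<times> 'w) set) obj" where
  "Qrep M e W = quot (ind M e W) (Nset M e (ind M e W))"

end

theory Submission
  imports Defs
begin

locale ctx =
  fixes M :: "'m lmonoid" and e :: 'm
  assumes GL: "Glinear_monoid M" and LIND: "left_inductive M"
    and ide: "idem M e" and enz: "e \<noteq> mzer M"
begin

abbreviation C where "C \<equiv> mcar M"
abbreviation z where "z \<equiv> mzer M"
abbreviation one where "one \<equiv> mone M"
abbreviation G where "G \<equiv> mgrp M"
abbreviation mul (infixl "\<cdot>" 70) where "x \<cdot> y \<equiv> mmul M x y"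

lemma fin: "finite C" using GL unfolding Glinear_monoid_def by blast
lemma one_C[simp]: "one \<in> C" using GL unfolding Glinear_monoid_def by blast
lemma z_C[simp]: "z \<in> C" using GL unfolding Glinear_monoid_def by blast
lemma cl[simp]: "x \<in> C \<Longrightarrow> y \<in> C \<Longrightarrow> x \<cdot> y \<in> C" using GL unfolding Glinear_monoid_def by blast
lemma assoc: "x \<in> C \<Longrightarrow> y \<in> C \<Longrightarrow> w \<in> C \<Longrightarrow> x \<cdot> y \<cdot> w = x \<cdot> (y \<cdot> w)"
  using GL unfolding Glinear_monoid_def by blast
lemma lone[simp]: "x \<in> C \<Longrightarrow> one \<cdot> x = x" using GL unfolding Glinear_monoid_def by blast
lemma rone[simp]: "x \<in> C \<Longrightarrow> x \<cdot> one = x" using GL unfolding Glinear_monoid_def by blast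
lemma lz[simp]: "x \<in> C \<Longrightarrow> z \<cdot> x = z" using GL unfolding Glinear_monoid_def by blast
lemma rz[simp]: "x \<in> C \<Longrightarrow> x \<cdot> z = z" using GL unfolding Glinear_monoid_def by blast
lemma GC: "g \<in> G \<Longrightarrow> g \<in> C" using GL unfolding Glinear_monoid_def by blast
lemma one_G[simp]: "one \<in> G" using GL unfolding Glinear_monoid_def by blast
lemma Gcl: "g \<in> G \<Longrightarrow> h \<in> G \<Longrightarrow> g \<cdot> h \<in> G" using GL unfolding Glinear_monoid_def by blast
lemma Ginv: "g \<in> G \<Longrightarrow> \<exists>h\<in>G. g \<cdot> h = one \<and> h \<cdot> g = one" using GL unfolding Glinear_monoid_def by blast
lemma Gcomm: "g \<in> G \<Longrightarrow> x \<in> C \<Longrightarrow> g \<cdot> x = x \<cdot> g" using GL unfolding Glinear_monoid_def by blast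
lemma Gfree: "g \<in> G \<Longrightarrow> x \<in> C \<Longrightarrow> x \<noteq> z \<Longrightarrow> g \<cdot> x = x \<Longrightarrow> g = one"
  using GL unfolding Glinear_monoid_def by blast
lemma eC[simp]: "e \<in> C" using ide unfolding idem_def by blast
lemma ee[simp]: "e \<cdot> e = e" using ide unfolding idem_def by blast

lemma assoc4: "a \<in> C \<Longrightarrow> b \<in> C \<Longrightarrow> c \<in> C \<Longrightarrow> d \<in> C \<Longrightarrow> a \<cdot> b \<cdot> c \<cdot> d = a \<cdot> (b \<cdot> (c \<cdot> d))"
  by (simp add: assoc)

lemma Jideal_iff: "x \<in> Jideal M a \<longleftrightarrow> (\<exists>p\<in>C. \<exists>q\<in>C. x = p \<cdot> a \<cdot> q)"
  unfolding Jideal_def by blast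

lemma Jideal_self: "a \<in> C \<Longrightarrow> a \<in> Jideal M a"
  unfolding Jideal_iff by (rule bexI[of _ one], rule bexI[of _ one]) auto

lemma Jideal_C: "a \<in> C \<Longrightarrow> x \<in> Jideal M a \<Longrightarrow> x \<in> C"
  unfolding Jideal_iff by auto

lemma Jideal_trans: "a \<in> C \<Longrightarrow> x \<in> Jideal M a \<Longrightarrow> y \<in> Jideal M x \<Longrightarrow> y \<in> Jideal M a"
proof -
  assume a: "a \<in> C" "x \<in> Jideal M a" "y \<in> Jideal M x"
  then obtain p q where pq: "p \<in> C" "q \<in> C" "x = p \<cdot> a \<cdot> q" unfolding Jideal_iff by blast
  from a obtain r s where rs: "r \<in> C" "s \<in> C" "y = r \<cdot> x \<cdot> s" unfolding Jideal_iff by blast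
  have "y = (r \<cdot> p) \<cdot> a \<cdot> (q \<cdot> s)" using pq rs a by (simp add: assoc)
  then show ?thesis unfolding Jideal_iff using pq rs cl by blast
qed

lemma Jideal_mul: "p \<in> C \<Longrightarrow> a \<in> C \<Longrightarrow> q \<in> C \<Longrightarrow> p \<cdot> a \<cdot> q \<in> Jideal M a"
  unfolding Jideal_iff by blast
lemma Jideal_mulL: "p \<in> C \<Longrightarrow> a \<in> C \<Longrightarrow> p \<cdot> a \<in> Jideal M a"
  using Jideal_mul[of p a one] by simp
lemma Jideal_mulR: "q \<in> C \<Longrightarrow> a \<in> C \<Longrightarrow> a \<cdot> q \<in> Jideal M a"
  using Jideal_mul[of one a q] by simp

definition JJ where "JJ = Jclass M e"

lemma JJ_iff: "x \<in> JJ \<longleftrightarrow> x \<in> C \<and> x \<in> Jideal M e \<and> e \<in> Jideal M x"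
proof
  assume "x \<in> JJ"
  then have x: "x \<in> C" "Jideal M x = Jideal M e" unfolding JJ_def Jclass_def by auto
  then show "x \<in> C \<and> x \<in> Jideal M e \<and> e \<in> Jideal M x" using Jideal_self by auto
next
  assume x: "x \<in> C \<and> x \<in> Jideal M e \<and> e \<in> Jideal M x"
  then have "Jideal M x = Jideal M e" using Jideal_trans Jideal_C
    by (meson eC subsetI subset_antisym)
  then show "x \<in> JJ" using x unfolding JJ_def Jclass_def by auto
qed

lemma eJ[simp]: "e \<in> JJ" using JJ_iff Jideal_self by auto

lemma zJ[simp]: "z \<notin> JJ"
proof
  assume "z \<in> JJ"
  then have "e \<in> Jideal M z" using JJ_iff by auto
  then show False using enz unfolding Jideal_iff by auto
qed

lemma JdiffI: "Jideal M e - Iideal M e = JJ"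
proof (intro set_eqI iffI)
  fix x assume "x \<in> Jideal M e - Iideal M e"
  then show "x \<in> JJ" unfolding Iideal_def JJ_def Jclass_def using Jideal_C[of e x] by auto
next
  fix x assume "x \<in> JJ"
  then have "x \<in> C" "Jideal M x = Jideal M e" unfolding JJ_def Jclass_def by auto
  then show "x \<in> Jideal M e - Iideal M e" unfolding Iideal_def using Jideal_self[of x] by auto
qed

lemma pmul_eq: "pmul M e x y = (if x \<cdot> y \<in> JJ then x \<cdot> y else z)"
  unfolding pmul_def JdiffI by simp

lemma J_left: "x \<in> C \<Longrightarrow> y \<in> C \<Longrightarrow> x \<cdot> y \<in> JJ \<Longrightarrow> e \<in> Jideal M y"
  by (meson JJ_iff Jideal_mulL Jideal_trans)
lemma J_right: "x \<in> C \<Longrightarrow> y \<in> C \<Longrightarrow> x \<cdot> y \<in> JJ \<Longrightarrow> e \<in> Jideal M x"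
  by (meson JJ_iff Jideal_mulR Jideal_trans)

lemma J_mulL: "x \<in> C \<Longrightarrow> y \<in> JJ \<Longrightarrow> e \<in> Jideal M (x \<cdot> y) \<Longrightarrow> x \<cdot> y \<in> JJ"
  by (meson JJ_iff Jideal_mulL Jideal_trans cl eC)
lemma J_mulR: "x \<in> JJ \<Longrightarrow> y \<in> C \<Longrightarrow> e \<in> Jideal M (x \<cdot> y) \<Longrightarrow> x \<cdot> y \<in> JJ"
  by (meson JJ_iff Jideal_mulR Jideal_trans cl eC)

end

context ctx begin

definition mpow where "mpow x n = (mmul M x ^^ n) one"

lemma mpow_0[simp]: "mpow x 0 = one" unfolding mpow_def by simp
lemma mpow_Suc: "mpow x (Suc n) = x \<cdot> mpow x n" unfolding mpow_def by simp
lemma mpow_C[simp]: "x \<in> C \<Longrightarrow> mpow x n \<in> C"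
  by (induction n) (auto simp: mpow_Suc)
lemma mpow_add: "x \<in> C \<Longrightarrow> mpow x (a + b) = mpow x a \<cdot> mpow x b"
  by (induction a) (auto simp: mpow_Suc assoc)
lemma mpow_1[simp]: "x \<in> C \<Longrightarrow> mpow x 1 = x" by (simp add: mpow_Suc)
lemma mpow_Suc0[simp]: "x \<in> C \<Longrightarrow> mpow x (Suc 0) = x" by (simp add: mpow_Suc)
lemma mpow_Suc': "x \<in> C \<Longrightarrow> mpow x (Suc n) = mpow x n \<cdot> x"
  using mpow_add[of x n 1] by simp

lemma idem_pow: assumes x: "x \<in> C" shows "\<exists>n\<ge>1. mpow x n \<cdot> mpow x n = mpow x n"
proof -
  have "\<not> inj (\<lambda>n. mpow x n)"
  proof
    assume "inj (\<lambda>n. mpow x n)"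
    moreover have "range (\<lambda>n. mpow x n) \<subseteq> C" using x by auto
    ultimately have "finite (UNIV :: nat set)"
      using fin finite_subset inj_on_finite by blast
    then show False by simp
  qed
  then obtain i j where ij: "i \<noteq> j" "mpow x i = mpow x j" unfolding inj_def by blast
  then obtain i j where ij: "i < j" "mpow x i = mpow x j"
    by (metis linorder_neqE_nat)
  define p where "p = j - i"
  have p: "p \<ge> 1" "j = i + p" using ij unfolding p_def by auto
  have per: "mpow x (i + k + p) = mpow x (i + k)" for k
  proof -
    have "mpow x (i + k + p) = mpow x (j + k)" using p by (simp add: algebra_simps)
    also have "\<dots> = mpow x j \<cdot> mpow x k" using x mpow_add by blast
    also have "\<dots> = mpow x i \<cdot> mpow x k" using ij by simp
    also have "\<dots> = mpow x (i + k)" using x mpow_add by simp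
    finally show ?thesis .
  qed
  have perq: "mpow x (i + k + q * p) = mpow x (i + k)" for k q
  proof (induction q)
    case (Suc q)
    have "mpow x (i + k + Suc q * p) = mpow x (i + (k + q * p) + p)" by (simp add: algebra_simps)
    also have "\<dots> = mpow x (i + (k + q * p))" by (rule per)
    also have "\<dots> = mpow x (i + k)" using Suc by (simp add: algebra_simps)
    finally show ?case .
  qed simp
  define n where "n = (i + 1) * p"
  obtain q where q: "p = Suc q" using p by (cases p) auto
  have n1: "n \<ge> 1" "n \<ge> i" unfolding n_def q by simp_all
  have "mpow x n \<cdot> mpow x n = mpow x (n + n)" using mpow_add x by simp
  also have "\<dots> = mpow x (i + (n - i) + (i + 1) * p)" using n1 unfolding n_def by simp
  also have "\<dots> = mpow x (i + (n - i))" by (rule perq)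
  also have "\<dots> = mpow x n" using n1 by simp
  finally show ?thesis using n1 by blast
qed

lemma stabL: assumes C: "a \<in> C" "b \<in> C" "s \<in> C" "t \<in> C" and eq: "a = s \<cdot> (b \<cdot> a) \<cdot> t"
  shows "\<exists>u\<in>C. a = u \<cdot> (b \<cdot> a)"
proof -
  define y where "y = s \<cdot> b"
  have y: "y \<in> C" using C y_def by simp
  have ya: "a = y \<cdot> a \<cdot> t" using eq C unfolding y_def by (simp add: assoc)
  have it: "a = mpow y n \<cdot> a \<cdot> mpow t n" for n
  proof (induction n)
    case 0 then show ?case using C by simp
  next
    case (Suc n)
    have "a = mpow y n \<cdot> (y \<cdot> a \<cdot> t) \<cdot> mpow t n" using Suc ya by simp
    also have "\<dots> = (mpow y n \<cdot> y) \<cdot> a \<cdot> (t \<cdot> mpow t n)" using C y by (simp add: assoc)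
    also have "\<dots> = mpow y (Suc n) \<cdot> a \<cdot> mpow t (Suc n)" using C y mpow_Suc'[of y n] mpow_Suc[of t n] by simp
    finally show ?case .
  qed
  obtain n where n: "n \<ge> 1" "mpow y n \<cdot> mpow y n = mpow y n" using idem_pow y by blast
  have "a = mpow y n \<cdot> a \<cdot> mpow t n" by (rule it)
  also have "\<dots> = mpow y n \<cdot> (mpow y n \<cdot> a \<cdot> mpow t n)" using n C y by (metis assoc mpow_C cl)
  also have "\<dots> = mpow y n \<cdot> a" using it by metis
  finally have a1: "a = mpow y n \<cdot> a" .
  obtain m where m: "n = Suc m" using n by (cases n) auto
  have "a = (mpow y m \<cdot> s) \<cdot> (b \<cdot> a)" using a1 C y unfolding m by (simp add: mpow_Suc' assoc y_def)
  then show ?thesis using C y by (intro bexI[of _ "mpow y m \<cdot> s"]) auto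
qed

lemma stabR: assumes C: "a \<in> C" "b \<in> C" "s \<in> C" "t \<in> C" and eq: "a = s \<cdot> (a \<cdot> b) \<cdot> t"
  shows "\<exists>v\<in>C. a = (a \<cdot> b) \<cdot> v"
proof -
  define y where "y = b \<cdot> t"
  have y: "y \<in> C" using C y_def by simp
  have ya: "a = s \<cdot> a \<cdot> y" using eq C unfolding y_def by (simp add: assoc)
  have it: "a = mpow s n \<cdot> a \<cdot> mpow y n" for n
  proof (induction n)
    case 0 then show ?case using C by simp
  next
    case (Suc n)
    have "a = mpow s n \<cdot> (s \<cdot> a \<cdot> y) \<cdot> mpow y n" using Suc ya by simp
    also have "\<dots> = (mpow s n \<cdot> s) \<cdot> a \<cdot> (y \<cdot> mpow y n)" using C y by (simp add: assoc)
    also have "\<dots> = mpow s (Suc n) \<cdot> a \<cdot> mpow y (Suc n)" using C y mpow_Suc'[of s n] mpow_Suc[of y n] by simp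
    finally show ?case .
  qed
  obtain n where n: "n \<ge> 1" "mpow y n \<cdot> mpow y n = mpow y n" using idem_pow y by blast
  have "a = mpow s n \<cdot> a \<cdot> mpow y n" by (rule it)
  also have "\<dots> = (mpow s n \<cdot> a \<cdot> mpow y n) \<cdot> mpow y n" using n C y by (metis assoc mpow_C cl)
  also have "\<dots> = a \<cdot> mpow y n" using it by metis
  finally have a1: "a = a \<cdot> mpow y n" .
  obtain m where m: "n = Suc m" using n by (cases n) auto
  have "a = (a \<cdot> b) \<cdot> (t \<cdot> mpow y m)" using a1 C y unfolding m by (simp add: mpow_Suc assoc y_def)
  then show ?thesis using C y by (intro bexI[of _ "t \<cdot> mpow y m"]) auto
qed

end

context ctx begin

lemma ee2[simp]: "x \<in> C \<Longrightarrow> e \<cdot> (e \<cdot> x) = e \<cdot> x" by (simp flip: assoc)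

lemma JJ_C: "x \<in> JJ \<Longrightarrow> x \<in> C" using JJ_iff by auto

lemma L1: assumes "x \<in> JJ" "x \<cdot> e = x" shows "\<exists>u\<in>C. u \<cdot> x = e"
proof -
  have x: "x \<in> C" using assms JJ_C by auto
  obtain p q where pq: "p \<in> C" "q \<in> C" "e = p \<cdot> x \<cdot> q" using assms JJ_iff Jideal_iff by blast
  then have "e = p \<cdot> (x \<cdot> e) \<cdot> q" using assms by simp
  from stabL[OF eC x pq(1,2) this] assms show ?thesis by auto
qed

lemma R1: assumes "x \<in> JJ" "e \<cdot> x = x" shows "\<exists>v\<in>C. x \<cdot> v = e"
proof -
  have x: "x \<in> C" using assms JJ_C by auto
  obtain p q where pq: "p \<in> C" "q \<in> C" "e = p \<cdot> x \<cdot> q" using assms JJ_iff Jideal_iff by blast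
  then have "e = p \<cdot> (e \<cdot> x) \<cdot> q" using assms by simp
  from stabR[OF eC x pq(1,2) this] assms show ?thesis by auto
qed

lemma GJ_iff: "a \<in> GJ M e \<longleftrightarrow> a \<in> JJ \<and> e \<cdot> a = a \<and> a \<cdot> e = a"
proof
  assume "a \<in> GJ M e"
  then obtain m where m: "m \<in> C" "a = e \<cdot> m \<cdot> e" "a \<in> JJ" unfolding GJ_def JJ_def by blast
  then show "a \<in> JJ \<and> e \<cdot> a = a \<and> a \<cdot> e = a" 
    by (metis assoc cl eC ee)
next
  assume a: "a \<in> JJ \<and> e \<cdot> a = a \<and> a \<cdot> e = a"
  then have "a = e \<cdot> a \<cdot> e" "a \<in> C" using JJ_C by auto
  then show "a \<in> GJ M e" using a unfolding GJ_def JJ_def by blast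
qed

lemma GJ_C: "a \<in> GJ M e \<Longrightarrow> a \<in> C" using GJ_iff JJ_C by blast
lemma GJ_JJ: "a \<in> GJ M e \<Longrightarrow> a \<in> JJ" using GJ_iff by blast
lemma GJ_le: "a \<in> GJ M e \<Longrightarrow> e \<cdot> a = a" using GJ_iff by blast
lemma GJ_re: "a \<in> GJ M e \<Longrightarrow> a \<cdot> e = a" using GJ_iff by blast
lemma eGJ[simp]: "e \<in> GJ M e" using GJ_iff by simp

lemma GJ_inv: assumes a: "a \<in> GJ M e" shows "\<exists>b\<in>GJ M e. a \<cdot> b = e \<and> b \<cdot> a = e"
proof -
  have aC: "a \<in> C" using a GJ_C by auto
  obtain u where u: "u \<in> C" "u \<cdot> a = e" using L1 a GJ_iff by blast
  obtain v where v: "v \<in> C" "a \<cdot> v = e" using R1 a GJ_iff by blast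
  have ue: "u \<cdot> e = e \<cdot> v"
  proof -
    have "u \<cdot> e = u \<cdot> (a \<cdot> v)" using v by simp
    also have "\<dots> = u \<cdot> a \<cdot> v" using assoc[OF u(1) aC v(1)] by (rule sym)
    also have "\<dots> = e \<cdot> v" using u by simp
    finally show ?thesis .
  qed
  define b where "b = e \<cdot> u \<cdot> e"
  have bC: "b \<in> C" using u b_def by simp
  have ba: "b \<cdot> a = e" unfolding b_def using u aC GJ_le[OF a] by (simp add: assoc)
  have ab: "a \<cdot> b = e"
  proof -
    have "a \<cdot> b = (a \<cdot> e) \<cdot> (u \<cdot> e)" unfolding b_def using u aC by (simp add: assoc)
    also have "\<dots> = a \<cdot> (e \<cdot> v)" using GJ_re[OF a] ue by simp
    also have "\<dots> = (a \<cdot> e) \<cdot> v" using v aC by (simp add: assoc)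
    finally show ?thesis using GJ_re[OF a] v by simp
  qed
  have "b \<in> Jideal M e" unfolding b_def using Jideal_mul[of one e "u \<cdot> e"] u by (simp add: assoc)
  moreover have "e \<in> Jideal M b" using Jideal_mul[of one b a] bC aC ba by simp
  ultimately have "b \<in> JJ" using JJ_iff bC by auto
  moreover have "e \<cdot> b = b" "b \<cdot> e = b" unfolding b_def using u by (simp_all add: assoc)
  ultimately have "b \<in> GJ M e" using GJ_iff by auto
  then show ?thesis using ab ba by blast
qed

lemma GJ_mul: assumes a: "a \<in> GJ M e" and b: "b \<in> GJ M e" shows "a \<cdot> b \<in> GJ M e"
proof -
  have C: "a \<in> C" "b \<in> C" using a b GJ_C by auto
  obtain c where c: "c \<in> GJ M e" "b \<cdot> c = e" using GJ_inv b by blast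
  have cC: "c \<in> C" using c GJ_C by auto
  have "a = a \<cdot> b \<cdot> c" using c C cC GJ_re[OF a] by (simp add: assoc)
  then have "a \<in> Jideal M (a \<cdot> b)" using Jideal_mul[of one "a \<cdot> b" c] C cC by simp
  then have "e \<in> Jideal M (a \<cdot> b)" using a GJ_JJ JJ_iff Jideal_trans C by (meson cl)
  moreover have "a \<cdot> b \<in> Jideal M e"
    using a GJ_JJ JJ_iff Jideal_trans C Jideal_mulR by (meson eC)
  ultimately have "a \<cdot> b \<in> JJ" using JJ_iff C by simp
  moreover have "e \<cdot> (a \<cdot> b) = a \<cdot> b" using GJ_le[OF a] C by (simp flip: assoc)
  moreover have "a \<cdot> b \<cdot> e = a \<cdot> b" using GJ_re[OF b] C by (simp add: assoc)
  ultimately show ?thesis using GJ_iff by simp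
qed

lemma Ginv': assumes "g \<in> G" obtains h where "h \<in> G" "g \<cdot> h = one" "h \<cdot> g = one"
  using Ginv assms by blast

lemma G_JJ: assumes g: "g \<in> G" and x: "x \<in> JJ" shows "g \<cdot> x \<in> JJ"
proof -
  obtain h where h: "h \<in> G" "h \<cdot> g = one" using Ginv' g by blast
  have C: "g \<in> C" "h \<in> C" "x \<in> C" using g h GC x JJ_C by auto
  have "h \<cdot> (g \<cdot> x) = h \<cdot> g \<cdot> x" using assoc[of h g x] C by simp
  then have "x = h \<cdot> (g \<cdot> x)" using h C by simp
  then have "x \<in> Jideal M (g \<cdot> x)" using Jideal_mulL[of h "g \<cdot> x"] C by simp
  then have "e \<in> Jideal M (g \<cdot> x)" using x JJ_iff Jideal_trans C by (meson cl)
  then show ?thesis using J_mulL C x by blast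
qed

lemma GeGJ: assumes g: "g \<in> G" shows "g \<cdot> e \<in> GJ M e"
proof -
  have gC: "g \<in> C" using g GC by auto
  have "g \<cdot> e \<in> JJ" using G_JJ g by simp
  moreover have "e \<cdot> (g \<cdot> e) = g \<cdot> e"
  proof -
    have "e \<cdot> (g \<cdot> e) = e \<cdot> g \<cdot> e" using assoc[of e g e] gC by simp
    also have "\<dots> = g \<cdot> e \<cdot> e" using Gcomm[OF g eC] by simp
    also have "\<dots> = g \<cdot> e" using assoc[of g e e] gC by simp
    finally show ?thesis .
  qed
  moreover have "g \<cdot> e \<cdot> e = g \<cdot> e" using gC by (simp add: assoc)
  ultimately show ?thesis using GJ_iff by simp
qed

definition Lset where "Lset = {x \<in> JJ. x \<cdot> e = x}"

lemma Lset_C: "x \<in> Lset \<Longrightarrow> x \<in> C" unfolding Lset_def using JJ_C by auto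
lemma Lset_nz: "x \<in> Lset \<Longrightarrow> x \<noteq> z" unfolding Lset_def by auto
lemma GJ_Lset: "a \<in> GJ M e \<Longrightarrow> a \<in> Lset" unfolding Lset_def GJ_iff by auto
lemma e_Lset[simp]: "e \<in> Lset" by (simp add: GJ_Lset)

lemma rcarP: "rcar (Pobj M e) = insert z JJ"
  unfolding Pobj_def using JdiffI by auto

lemma PeE_eq: "PeE M e = insert z Lset"
proof -
  have "PeE M e = (\<lambda>x. pmul M e x e) ` insert z JJ" unfolding PeE_def rcarP by simp
  also have "\<dots> = insert z Lset"
  proof (intro set_eqI iffI)
    fix y assume "y \<in> (\<lambda>x. pmul M e x e) ` insert z JJ"
    then obtain x where x: "x \<in> insert z JJ" "y = pmul M e x e" by blast
    then show "y \<in> insert z Lset" unfolding pmul_eq Lset_def using JJ_C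
      by (auto simp: assoc)
  next
    fix y assume y: "y \<in> insert z Lset"
    show "y \<in> (\<lambda>x. pmul M e x e) ` insert z JJ"
    proof (cases "y = z")
      case True then show ?thesis by (intro image_eqI[of _ _ z]) (auto simp: pmul_eq)
    next
      case False then have "y \<in> Lset" using y by auto
      then show ?thesis unfolding Lset_def by (intro image_eqI[of _ _ y]) (auto simp: pmul_eq)
    qed
  qed
  finally show ?thesis .
qed

lemma Lset_GJ: assumes x: "x \<in> Lset" and a: "a \<in> GJ M e" shows "x \<cdot> a \<in> Lset"
proof -
  have C: "x \<in> C" "a \<in> C" using x a Lset_C GJ_C by auto
  obtain b where b: "b \<in> GJ M e" "a \<cdot> b = e" using GJ_inv a by blast
  have bC: "b \<in> C" using b GJ_C by auto
  have "x = x \<cdot> a \<cdot> b" using x b C bC unfolding Lset_def by (simp add: assoc)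
  then have "x \<in> Jideal M (x \<cdot> a)" using Jideal_mul[of one "x \<cdot> a" b] C bC by simp
  moreover have xJ: "x \<in> JJ" using x unfolding Lset_def by blast
  ultimately have "e \<in> Jideal M (x \<cdot> a)" using JJ_iff Jideal_trans[of "x \<cdot> a" x e] C by simp
  then have "x \<cdot> a \<in> JJ" using J_mulR C xJ by blast
  moreover have "x \<cdot> a \<cdot> e = x \<cdot> a" using C GJ_re[OF a] by (simp add: assoc)
  ultimately show ?thesis unfolding Lset_def by blast
qed

lemma Lset_G: assumes x: "x \<in> Lset" and g: "g \<in> G" shows "g \<cdot> x \<in> Lset"
  using G_JJ[OF g] x GC[OF g] unfolding Lset_def by (auto simp: assoc JJ_C)

lemma Lset_mul: "m \<in> C \<Longrightarrow> x \<in> Lset \<Longrightarrow> m \<cdot> x \<in> JJ \<Longrightarrow> m \<cdot> x \<in> Lset"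
  unfolding Lset_def by (auto simp: assoc JJ_C)

abbreviation pm where "pm m x \<equiv> pmul M e m x"

lemma pm_z[simp]: "m \<in> C \<Longrightarrow> pm m z = z" by (simp add: pmul_eq)

lemma pm_PeE: "m \<in> C \<Longrightarrow> x \<in> PeE M e \<Longrightarrow> pm m x \<in> PeE M e"
  unfolding PeE_eq pmul_eq using Lset_mul by auto

lemma pm_Lset: "m \<in> C \<Longrightarrow> x \<in> Lset \<Longrightarrow> m \<cdot> x \<in> JJ \<Longrightarrow> pm m x = m \<cdot> x"
  by (simp add: pmul_eq)

lemma pm_comp: assumes m: "m \<in> C" and n: "n \<in> C" and x: "x \<in> PeE M e"
  shows "pm (m \<cdot> n) x = pm m (pm n x)"
proof (cases "x = z")
  case True then show ?thesis using m n by simp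
next
  case False
  then have x: "x \<in> Lset" using x PeE_eq by auto
  then have xC: "x \<in> C" "x \<in> JJ" using Lset_C Lset_def by auto
  show ?thesis
  proof (cases "n \<cdot> x \<in> JJ")
    case True then show ?thesis using m n xC by (simp add: pmul_eq assoc)
  next
    case False
    have "m \<cdot> (n \<cdot> x) \<notin> JJ"
    proof
      assume "m \<cdot> (n \<cdot> x) \<in> JJ"
      then have "e \<in> Jideal M (n \<cdot> x)" using J_left m n xC by simp
      moreover have "n \<cdot> x \<in> Jideal M e" using xC n JJ_iff Jideal_mulL Jideal_trans by (meson cl eC)
      ultimately show False using False JJ_iff n xC by simp
    qed
    then show ?thesis using False m n xC by (simp add: pmul_eq assoc)
  qed
qed

lemma pm_one: "x \<in> PeE M e \<Longrightarrow> pm one x = x"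
  unfolding PeE_eq Lset_def pmul_eq by (auto simp: JJ_C)

lemma pm_zm: "x \<in> PeE M e \<Longrightarrow> pm z x = z"
  unfolding PeE_eq Lset_def pmul_eq by (auto simp: JJ_C)

lemma PeE_C: "x \<in> PeE M e \<Longrightarrow> x \<in> C" unfolding PeE_eq using Lset_C by auto

lemma LIx: assumes m: "m \<in> C" and x: "x \<in> PeE M e" and y: "y \<in> PeE M e"
  and eq: "pm m x = pm m y" and nz: "pm m x \<noteq> z"
  shows "\<exists>g\<in>G. y = g \<cdot> x"
proof -
  have rep: "rep_M M (Pobj M e)" using LIND ide unfolding left_inductive_def by blast
  then have vm: "vect_morph M (Pobj M e) (Pobj M e) (ract (Pobj M e) m)"
    using m unfolding rep_M_def by blast
  have xy: "x \<in> rcar (Pobj M e)" "y \<in> rcar (Pobj M e)" using x y unfolding rcarP PeE_eq Lset_def by auto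
  have rP: "ract (Pobj M e) = (\<lambda>m x. pm m x)" "rzero (Pobj M e) = z" by (simp_all add: Pobj_def)
  have "\<forall>v1\<in>rcar (Pobj M e). \<forall>v2\<in>rcar (Pobj M e). ract (Pobj M e) m v1 = ract (Pobj M e) m v2
     \<and> ract (Pobj M e) m v1 \<noteq> rzero (Pobj M e) \<longrightarrow> orbit M (Pobj M e) v1 = orbit M (Pobj M e) v2"
    using vm unfolding vect_morph_def by blast
  from this[rule_format, OF xy] have "orbit M (Pobj M e) x = orbit M (Pobj M e) y"
    using eq nz rP by simp
  moreover have "y \<in> orbit M (Pobj M e) y"
    unfolding orbit_def Pobj_def using pm_one[OF y] by (auto intro: image_eqI[of _ _ one])
  ultimately obtain g where g: "g \<in> G" "y = pm g x" unfolding orbit_def Pobj_def by auto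
  have "x \<noteq> z" using nz m by auto
  then have "x \<in> Lset" using x PeE_eq by auto
  then have "g \<cdot> x \<in> JJ" using G_JJ g Lset_def by auto
  then show ?thesis using g pmul_eq by auto
qed

lemma IJ_iff: "x \<in> IJ M JJ \<longleftrightarrow> x \<in> C \<and> e \<notin> Jideal M x"
proof -
  have "JJ \<subseteq> Jideal M x \<longleftrightarrow> e \<in> Jideal M x" if "x \<in> C" for x
    using JJ_iff Jideal_trans that eJ by blast
  then show ?thesis unfolding IJ_def by auto
qed

end

lemma equiv_img: assumes eq: "equiv A r" and f: "\<And>p q. (p, q) \<in> r \<Longrightarrow> (f p, f q) \<in> r"
  and p: "p \<in> A" shows "r `` (f ` (r `` {p})) = r `` {f p}"
proof
  show "r `` (f ` (r `` {p})) \<subseteq> r `` {f p}"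
  proof
    fix y assume "y \<in> r `` (f ` (r `` {p}))"
    then obtain q where q: "(p, q) \<in> r" "(f q, y) \<in> r" by blast
    then have "(f p, f q) \<in> r" using f by blast
    then have "(f p, y) \<in> r" using q eq unfolding equiv_def trans_def by blast
    then show "y \<in> r `` {f p}" by blast
  qed
next
  have "(p, p) \<in> r" using eq p unfolding equiv_def refl_on_def by blast
  then show "r `` {f p} \<subseteq> r `` (f ` (r `` {p}))" by blast
qed

context ctx begin

lemma hatGJ_iff: "a \<in> hatGJ M e \<longleftrightarrow> a \<in> GJ M e \<or> a = z" unfolding hatGJ_def by auto

lemma scal_simps[simp]: "rcar (scal M e W) = rcar W" "rzero (scal M e W) = rzero W"
  "ract (scal M e W) g = ract W (g \<cdot> e)"
  unfolding scal_def by simp_all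

lemma rGJ1: assumes "rep_GJ M e W" shows "vect_obj M (scal M e W)"
  using assms unfolding rep_GJ_def by (elim conjE) assumption
lemma rGJ2: assumes "rep_GJ M e W" shows "\<forall>a\<in>hatGJ M e. vect_morph M (scal M e W) (scal M e W) (ract W a)"
  using assms unfolding rep_GJ_def by (elim conjE) assumption
lemma rGJ3: assumes "rep_GJ M e W" shows "\<forall>a\<in>hatGJ M e. \<forall>b\<in>hatGJ M e. \<forall>w\<in>rcar W. ract W (a \<cdot> b) w = ract W a (ract W b w)"
  using assms unfolding rep_GJ_def by (elim conjE) assumption
lemma rGJ4: assumes "rep_GJ M e W" shows "\<forall>w\<in>rcar W. ract W e w = w"
  using assms unfolding rep_GJ_def by (elim conjE) assumption
lemma rGJ5: assumes "rep_GJ M e W" shows "\<forall>w\<in>rcar W. ract W z w = rzero W"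
  using assms unfolding rep_GJ_def by (elim conjE) assumption
lemma vobj1: assumes "vect_obj M V" shows "finite (rcar V)"
  using assms unfolding vect_obj_def by (elim conjE) assumption
lemma vobj2: assumes "vect_obj M V" shows "rzero V \<in> rcar V"
  using assms unfolding vect_obj_def by (elim conjE) assumption
lemma vobj3: assumes "vect_obj M V" shows "\<forall>g\<in>G. \<forall>v\<in>rcar V. ract V g v \<in> rcar V"
  using assms unfolding vect_obj_def by (elim conjE) assumption
lemma vobj4: assumes "vect_obj M V" shows "\<forall>v\<in>rcar V. ract V one v = v"
  using assms unfolding vect_obj_def by (elim conjE) assumption
lemma vobj5: assumes "vect_obj M V" shows "\<forall>g\<in>G. \<forall>h\<in>G. \<forall>v\<in>rcar V. ract V (g \<cdot> h) v = ract V g (ract V h v)"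
  using assms unfolding vect_obj_def by (elim conjE) assumption
lemma vobj6: assumes "vect_obj M V" shows "\<forall>g\<in>G. ract V g (rzero V) = rzero V"
  using assms unfolding vect_obj_def by (elim conjE) assumption
lemma vobj7: assumes "vect_obj M V" shows "\<forall>g\<in>G. \<forall>v\<in>rcar V. v \<noteq> rzero V \<and> ract V g v = v \<longrightarrow> g = one"
  using assms unfolding vect_obj_def by (elim conjE) assumption
lemma vmor1: assumes "vect_morph M V W f" shows "\<forall>v\<in>rcar V. f v \<in> rcar W"
  using assms unfolding vect_morph_def by (elim conjE) assumption
lemma vmor2: assumes "vect_morph M V W f" shows "f (rzero V) = rzero W"
  using assms unfolding vect_morph_def by (elim conjE) assumption
lemma vmor3: assumes "vect_morph M V W f" shows "\<forall>g\<in>G. \<forall>v\<in>rcar V. f (ract V g v) = ract W g (f v)"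
  using assms unfolding vect_morph_def by (elim conjE) assumption
lemma vmor4: assumes "vect_morph M V W f" shows "\<forall>v1\<in>rcar V. \<forall>v2\<in>rcar V. f v1 = f v2 \<and> f v1 \<noteq> rzero W \<longrightarrow> orbit M V v1 = orbit M V v2"
  using assms unfolding vect_morph_def by (elim conjE) assumption
lemma rM1: assumes "rep_M M V" shows "vect_obj M V"
  using assms unfolding rep_M_def by (elim conjE) assumption
lemma rM2: assumes "rep_M M V" shows "\<forall>m\<in>C. vect_morph M V V (ract V m)"
  using assms unfolding rep_M_def by (elim conjE) assumption
lemma rM3: assumes "rep_M M V" shows "\<forall>m\<in>C. \<forall>n\<in>C. \<forall>v\<in>rcar V. ract V (m \<cdot> n) v = ract V m (ract V n v)"
  using assms unfolding rep_M_def by (elim conjE) assumption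
lemma rM4: assumes "rep_M M V" shows "\<forall>v\<in>rcar V. ract V one v = v"
  using assms unfolding rep_M_def by (elim conjE) assumption
lemma rM5: assumes "rep_M M V" shows "\<forall>v\<in>rcar V. ract V z v = rzero V"
  using assms unfolding rep_M_def by (elim conjE) assumption

lemma rW_fin: "rep_GJ M e W \<Longrightarrow> finite (rcar W)"
  using vobj1[OF rGJ1] by simp
lemma rW_zero: "rep_GJ M e W \<Longrightarrow> rzero W \<in> rcar W"
  using vobj2[OF rGJ1] by simp
lemma rW_vm: "rep_GJ M e W \<Longrightarrow> a \<in> hatGJ M e \<Longrightarrow> vect_morph M (scal M e W) (scal M e W) (ract W a)"
  using rGJ2 by blast
lemma rW_cl: assumes "rep_GJ M e W" "a \<in> hatGJ M e" "w \<in> rcar W" shows "ract W a w \<in> rcar W"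
  using vmor1[OF rW_vm[OF assms(1,2)]] assms(3) by simp
lemma rW_z: assumes "rep_GJ M e W" "a \<in> hatGJ M e" shows "ract W a (rzero W) = rzero W"
  using vmor2[OF rW_vm[OF assms(1,2)]] by simp
lemma rW_comp: "rep_GJ M e W \<Longrightarrow> a \<in> hatGJ M e \<Longrightarrow> b \<in> hatGJ M e \<Longrightarrow> w \<in> rcar W \<Longrightarrow>
   ract W (a \<cdot> b) w = ract W a (ract W b w)"
  using rGJ3 by blast
lemma rW_e: "rep_GJ M e W \<Longrightarrow> w \<in> rcar W \<Longrightarrow> ract W e w = w"
  using rGJ4 by blast
lemma rW_zm: "rep_GJ M e W \<Longrightarrow> w \<in> rcar W \<Longrightarrow> ract W z w = rzero W"
  using rGJ5 by blast
lemma rW_free: "rep_GJ M e W \<Longrightarrow> g \<in> G \<Longrightarrow> w \<in> rcar W \<Longrightarrow> w \<noteq> rzero W \<Longrightarrow>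
    ract W (g \<cdot> e) w = w \<Longrightarrow> g = one"
proof -
  assume W: "rep_GJ M e W" and g: "g \<in> G" and w: "w \<in> rcar W" "w \<noteq> rzero W" "ract W (g \<cdot> e) w = w"
  have h: "\<forall>g\<in>G. \<forall>v\<in>rcar (scal M e W). v \<noteq> rzero (scal M e W) \<and> ract (scal M e W) g v = v \<longrightarrow> g = one"
    by (rule vobj7[OF rGJ1[OF W]])
  have "w \<in> rcar (scal M e W)" "w \<noteq> rzero (scal M e W) \<and> ract (scal M e W) g w = w" using w by simp_all
  then show "g = one" using h g by blast
qed

lemma GJ_hat: "a \<in> GJ M e \<Longrightarrow> a \<in> hatGJ M e" by (simp add: hatGJ_iff)

lemma rW_clG: "rep_GJ M e W \<Longrightarrow> a \<in> GJ M e \<Longrightarrow> w \<in> rcar W \<Longrightarrow> ract W a w \<in> rcar W"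
  by (rule rW_cl[OF _ GJ_hat])

lemma rW_nz: assumes W: "rep_GJ M e W" and a: "a \<in> GJ M e" and w: "w \<in> rcar W" "w \<noteq> rzero W"
  shows "ract W a w \<noteq> rzero W"
proof
  assume h: "ract W a w = rzero W"
  obtain b where b: "b \<in> GJ M e" "b \<cdot> a = e" using GJ_inv a by blast
  have "w = ract W (b \<cdot> a) w" using b rW_e[OF W w(1)] by simp
  also have "\<dots> = ract W b (ract W a w)" using rW_comp[OF W GJ_hat[OF b(1)] GJ_hat[OF a] w(1)] by simp
  also have "\<dots> = rzero W" using h rW_z[OF W GJ_hat[OF b(1)]] by simp
  finally show False using w by simp
qed

lemma rW_inv: assumes W: "rep_GJ M e W" and a: "a \<in> GJ M e" and b: "b \<in> GJ M e" "b \<cdot> a = e"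
  and w: "w \<in> rcar W" shows "ract W b (ract W a w) = w"
  using rW_comp[OF W GJ_hat[OF b(1)] GJ_hat[OF a] w] b rW_e[OF W w] by simp

definition Rel :: "('m, 'w) obj \<Rightarrow> (('m \<times> 'w) \<times> ('m \<times> 'w)) set" where
  "Rel W = {((x, w), (y, v)). x \<in> PeE M e \<and> y \<in> PeE M e \<and> w \<in> rcar W \<and> v \<in> rcar W \<and>
     (((x = z \<or> w = rzero W) \<and> (y = z \<or> v = rzero W)) \<or>
      (x \<noteq> z \<and> w \<noteq> rzero W \<and> y \<noteq> z \<and> v \<noteq> rzero W \<and> (\<exists>a\<in>GJ M e. y = x \<cdot> a \<and> w = ract W a v)))}"

lemma PeE_Lset: "x \<in> PeE M e \<Longrightarrow> x \<noteq> z \<Longrightarrow> x \<in> Lset" using PeE_eq by auto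
lemma Lset_PeE: "x \<in> Lset \<Longrightarrow> x \<in> PeE M e" using PeE_eq by auto
lemma z_PeE[simp]: "z \<in> PeE M e" using PeE_eq by auto

lemma Rel_refl: assumes W: "rep_GJ M e W" and x: "x \<in> PeE M e" and w: "w \<in> rcar W"
  shows "((x, w), (x, w)) \<in> Rel W"
proof (cases "x = z \<or> w = rzero W")
  case True then show ?thesis using x w unfolding Rel_def by auto
next
  case False
  then have "x \<cdot> e = x" using x PeE_Lset Lset_def by auto
  moreover have "w = ract W e w" using rW_e[OF W w] by simp
  ultimately show ?thesis using x w False unfolding Rel_def by (auto intro!: bexI[of _ e])
qed

lemma Rel_sym: assumes W: "rep_GJ M e W" and r: "((x, w), (y, v)) \<in> Rel W"
  shows "((y, v), (x, w)) \<in> Rel W"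
proof (cases "(x = z \<or> w = rzero W) \<and> (y = z \<or> v = rzero W)")
  case True then show ?thesis using r unfolding Rel_def by auto
next
  case False
  then obtain a where a: "a \<in> GJ M e" "y = x \<cdot> a" "w = ract W a v" and nz: "x \<noteq> z" "w \<noteq> rzero W" "y \<noteq> z" "v \<noteq> rzero W"
    and mem: "x \<in> PeE M e" "y \<in> PeE M e" "w \<in> rcar W" "v \<in> rcar W"
    using r unfolding Rel_def by auto
  obtain b where b: "b \<in> GJ M e" "a \<cdot> b = e" "b \<cdot> a = e" using GJ_inv a by blast
  have xL: "x \<in> Lset" using mem nz PeE_Lset by auto
  have "y \<cdot> b = x" using a b xL Lset_C GJ_C unfolding Lset_def by (simp add: assoc)
  moreover have "ract W b w = v" using a rW_inv[OF W a(1) b(1) b(3) mem(4)] by simp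
  ultimately show ?thesis using mem nz b unfolding Rel_def by auto
qed

lemma Rel_trans: assumes W: "rep_GJ M e W" and r1: "((x, w), (y, v)) \<in> Rel W" and r2: "((y, v), (q, u)) \<in> Rel W"
  shows "((x, w), (q, u)) \<in> Rel W"
proof (cases "y = z \<or> v = rzero W")
  case True then show ?thesis using r1 r2 unfolding Rel_def by auto
next
  case False
  then obtain a where a: "a \<in> GJ M e" "y = x \<cdot> a" "w = ract W a v" and nz: "x \<noteq> z" "w \<noteq> rzero W"
    and mem: "x \<in> PeE M e" "y \<in> PeE M e" "w \<in> rcar W" "v \<in> rcar W"
    using r1 unfolding Rel_def by auto
  obtain b where b: "b \<in> GJ M e" "q = y \<cdot> b" "v = ract W b u" and nz2: "q \<noteq> z" "u \<noteq> rzero W"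
    and mem2: "q \<in> PeE M e" "u \<in> rcar W"
    using r2 False unfolding Rel_def by auto
  have "q = x \<cdot> (a \<cdot> b)" using a b mem PeE_C GJ_C by (simp add: assoc)
  moreover have "w = ract W (a \<cdot> b) u" using a b rW_comp[OF W GJ_hat[OF a(1)] GJ_hat[OF b(1)] mem2(2)] by simp
  moreover have "a \<cdot> b \<in> GJ M e" using GJ_mul a b by simp
  ultimately show ?thesis using mem mem2 nz nz2 unfolding Rel_def by auto
qed

lemma Rel_dom: "((x, w), (y, v)) \<in> Rel W \<Longrightarrow> x \<in> PeE M e \<and> y \<in> PeE M e \<and> w \<in> rcar W \<and> v \<in> rcar W"
  unfolding Rel_def by auto

lemma Rel_equiv: assumes W: "rep_GJ M e W" shows "equiv (PeE M e \<times> rcar W) (Rel W)"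
proof (rule equivI)
  show "Rel W \<subseteq> (PeE M e \<times> rcar W) \<times> (PeE M e \<times> rcar W)"
  proof
    fix p assume "p \<in> Rel W"
    moreover obtain x w y v where "p = ((x, w), (y, v))" by (metis prod.collapse)
    ultimately show "p \<in> (PeE M e \<times> rcar W) \<times> (PeE M e \<times> rcar W)" using Rel_dom[of x w y v W] by auto
  qed
  show "refl_on (PeE M e \<times> rcar W) (Rel W)"
    unfolding refl_on_def using Rel_refl[OF W] by auto
  show "sym (Rel W)" unfolding sym_def using Rel_sym[OF W] by auto
  show "trans (Rel W)" unfolding trans_def using Rel_trans[OF W] by auto
qed

lemma Rel_transD: assumes W: "rep_GJ M e W" shows "(p, q) \<in> Rel W \<Longrightarrow> (q, r) \<in> Rel W \<Longrightarrow> (p, r) \<in> Rel W"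
  using Rel_equiv[OF W] unfolding equiv_def trans_def by blast

lemma Rel_symD: assumes W: "rep_GJ M e W" shows "(p, q) \<in> Rel W \<Longrightarrow> (q, p) \<in> Rel W"
  using Rel_equiv[OF W] unfolding equiv_def sym_def by blast

lemma Rel_zero: "x \<in> PeE M e \<Longrightarrow> y \<in> PeE M e \<Longrightarrow> w \<in> rcar W \<Longrightarrow> v \<in> rcar W \<Longrightarrow>
   x = z \<or> w = rzero W \<Longrightarrow> y = z \<or> v = rzero W \<Longrightarrow> ((x, w), (y, v)) \<in> Rel W"
  unfolding Rel_def by auto

lemma Rel_gen1: assumes W: "rep_GJ M e W" and x: "x \<in> Lset" and a: "a \<in> GJ M e" and w: "w \<in> rcar W"
  shows "((x, ract W a w), (x \<cdot> a, w)) \<in> Rel W"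
proof (cases "w = rzero W")
  case True then show ?thesis
    using Rel_zero[of x "x \<cdot> a" "rzero W" W "rzero W"] rW_z[OF W GJ_hat[OF a]] Lset_PeE[OF x]
      Lset_PeE[OF Lset_GJ[OF x a]] rW_zero[OF W] by simp
next
  case False
  have "x \<cdot> a \<in> Lset" using Lset_GJ x a by simp
  then show ?thesis using False x a w rW_nz[OF W a w] rW_clG[OF W a w] Lset_PeE Lset_nz
    unfolding Rel_def by auto
qed

lemma gen1_mem: "x \<in> PeE M e \<Longrightarrow> a \<in> hatGJ M e \<Longrightarrow> w \<in> rcar W \<Longrightarrow>
  ((pm x a, w), (x, ract W a w)) \<in> ind_gen M e W"
  unfolding ind_gen_def by blast

lemma gen_sub: assumes W: "rep_GJ M e W" shows "ind_gen M e W \<subseteq> Rel W"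
proof
  fix p assume "p \<in> ind_gen M e W"
  then consider (g1) x a w where "p = ((pm x a, w), (x, ract W a w))" "x \<in> PeE M e" "a \<in> hatGJ M e" "w \<in> rcar W"
    | (g2) x g w where "p = ((g \<cdot> x, w), (x, ract W (g \<cdot> e) w))" "x \<in> PeE M e" "g \<in> G" "w \<in> rcar W"
    | (g3) x w where "p = ((x, rzero W), (z, w))" "x \<in> PeE M e" "w \<in> rcar W"
    unfolding ind_gen_def by blast
  then show "p \<in> Rel W"
  proof cases
    case g1
    show ?thesis
    proof (cases "x = z \<or> a = z")
      case True
      then have "pm x a = z" using g1 PeE_C GJ_C hatGJ_iff by (auto simp: pmul_eq)
      moreover have "x = z \<or> ract W a w = rzero W" using True rW_zm[OF W g1(4)] by auto
      ultimately show ?thesis unfolding g1(1) using g1 rW_cl[OF W] by (intro Rel_zero) auto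
    next
      case False
      then have xa: "x \<in> Lset" "a \<in> GJ M e" using g1 PeE_Lset hatGJ_iff by auto
      then have "pm x a = x \<cdot> a" using Lset_GJ Lset_def pmul_eq by simp
      then show ?thesis using Rel_sym[OF W Rel_gen1[OF W xa g1(4)]] g1 by simp
    qed
  next
    case g2
    have gC: "g \<in> C" using GC g2 by simp
    show ?thesis
    proof (cases "x = z")
      case True
      then show ?thesis unfolding g2(1) using gC g2(4) rW_cl[OF W GJ_hat[OF GeGJ[OF g2(3)]] g2(4)]
        by (intro Rel_zero) auto
    next
      case False
      then have xL: "x \<in> Lset" using g2 PeE_Lset by auto
      have "x \<cdot> (g \<cdot> e) = g \<cdot> x"
      proof -
        have "x \<cdot> (g \<cdot> e) = x \<cdot> g \<cdot> e" using assoc[of x g e] gC xL Lset_C by simp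
        also have "\<dots> = g \<cdot> x \<cdot> e" using Gcomm[OF g2(3), of x] xL Lset_C by simp
        also have "\<dots> = g \<cdot> x" using assoc[of g x e] gC xL Lset_C Lset_def by simp
        finally show ?thesis .
      qed
      then show ?thesis using Rel_sym[OF W Rel_gen1[OF W xL GeGJ[OF g2(3)] g2(4)]] g2 by simp
    qed
  next
    case g3 then show ?thesis unfolding g3(1) using g3(2,3) rW_zero[OF W] by (intro Rel_zero) auto
  qed
qed

lemma ind_rel_eq: assumes W: "rep_GJ M e W" shows "ind_rel M e W = Rel W"
proof
  let ?S = "ind_gen M e W \<union> (ind_gen M e W)\<inverse>"
  have SR: "?S \<subseteq> Rel W" using gen_sub[OF W] Rel_sym[OF W] by auto
  show "ind_rel M e W \<subseteq> Rel W"
  proof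
    fix p assume p: "p \<in> ind_rel M e W"
    then have st: "p \<in> ?S\<^sup>*" and dom: "p \<in> (PeE M e \<times> rcar W) \<times> (PeE M e \<times> rcar W)"
      unfolding ind_rel_def by auto
    obtain a b where ab: "p = (a, b)" by (cases p)
    have "a = b \<or> (a, b) \<in> Rel W" using st[unfolded ab]
    proof (induction rule: rtrancl_induct)
      case base then show ?case by simp
    next
      case (step y w)
      then have yw: "(y, w) \<in> Rel W" using SR by auto
      show ?case using step.IH
      proof
        assume "a = y" then show ?thesis using yw by simp
      next
        assume "(a, y) \<in> Rel W" then show ?thesis using yw Rel_transD[OF W]
          by blast
      qed
    qed
    then show "p \<in> Rel W" using dom ab Rel_refl[OF W] by auto
  qed
next
  let ?S = "ind_gen M e W \<union> (ind_gen M e W)\<inverse>"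
  have z0: "((x, w), (z, rzero W)) \<in> ?S" if "x \<in> PeE M e" "w \<in> rcar W" "x = z \<or> w = rzero W" for x w
  proof (cases "x = z")
    case True
    then have "((z, rzero W), (x, w)) \<in> ind_gen M e W" unfolding ind_gen_def using that by blast
    then show ?thesis by blast
  next
    case False
    then have "((x, rzero W), (z, rzero W)) \<in> ind_gen M e W" unfolding ind_gen_def using that rW_zero[OF W] by blast
    then show ?thesis using False that by auto
  qed
  show "Rel W \<subseteq> ind_rel M e W"
  proof
    fix p assume p: "p \<in> Rel W"
    obtain x w y v where p': "p = ((x, w), (y, v))" by (metis prod.collapse)
    have mem: "x \<in> PeE M e" "y \<in> PeE M e" "w \<in> rcar W" "v \<in> rcar W" using p p' Rel_dom[of x w y v W] by auto
    have "((x, w), (y, v)) \<in> ?S\<^sup>*"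
    proof (cases "(x = z \<or> w = rzero W) \<and> (y = z \<or> v = rzero W)")
      case True
      have 1: "((x, w), (z, rzero W)) \<in> ?S" using z0 mem True by simp
      have "((y, v), (z, rzero W)) \<in> ?S" using z0 mem True by simp
      then have 2: "((z, rzero W), (y, v)) \<in> ?S" by blast
      show ?thesis using 1 2 by (meson r_into_rtrancl rtrancl_trans)
    next
      case False
      then obtain a where a: "a \<in> GJ M e" "y = x \<cdot> a" "w = ract W a v" and nz: "x \<noteq> z"
        using p p' unfolding Rel_def by auto
      have xL: "x \<in> Lset" using nz mem PeE_Lset by auto
      have "pm x a = x \<cdot> a" using Lset_GJ[OF xL a(1)] Lset_def pmul_eq by simp
      then have "((y, v), (x, w)) \<in> ind_gen M e W"
        using gen1_mem[of x a v W] a mem GJ_hat by simp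
      then show ?thesis by blast
    qed
    then show "p \<in> ind_rel M e W" unfolding ind_rel_def using p' mem by auto
  qed
qed

end

context ctx begin

lemma orbit_shift: assumes V: "vect_obj M V" and v: "v \<in> rcar V" and g: "g \<in> G"
  shows "orbit M V (ract V g v) = orbit M V v"
proof
  have comp: "\<And>a b. a \<in> G \<Longrightarrow> b \<in> G \<Longrightarrow> ract V (a \<cdot> b) v = ract V a (ract V b v)"
    using vobj5[OF V] v by blast
  show "orbit M V (ract V g v) \<subseteq> orbit M V v"
  proof
    fix y assume "y \<in> orbit M V (ract V g v)"
    then obtain h where h: "h \<in> G" "y = ract V h (ract V g v)" unfolding orbit_def by blast
    then have "y = ract V (h \<cdot> g) v" using comp g by simp
    then show "y \<in> orbit M V v" unfolding orbit_def using Gcl[OF h(1) g] by blast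
  qed
  show "orbit M V v \<subseteq> orbit M V (ract V g v)"
  proof
    fix y assume "y \<in> orbit M V v"
    then obtain k where k: "k \<in> G" "y = ract V k v" unfolding orbit_def by blast
    obtain h where h: "h \<in> G" "h \<cdot> g = one" using Ginv'[OF g] by blast
    have "k \<cdot> h \<cdot> g = k" using h k GC g by (simp add: assoc)
    then have "y = ract V (k \<cdot> h \<cdot> g) v" using k by simp
    also have "\<dots> = ract V (k \<cdot> h) (ract V g v)" using comp Gcl[OF k(1) h(1)] g by simp
    finally show "y \<in> orbit M V (ract V g v)" unfolding orbit_def using Gcl[OF k(1) h(1)] by blast
  qed
qed

definition cls :: "('m, 'w) obj \<Rightarrow> 'm \<Rightarrow> 'w \<Rightarrow> ('m \<times> 'w) set" where
  "cls W x w = Rel W `` {(x, w)}"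

lemma ind_car: assumes W: "rep_GJ M e W" shows "rcar (ind M e W) = (PeE M e \<times> rcar W) // Rel W"
  by (simp add: ind_def ind_rel_eq[OF W])
lemma ind_zero: assumes W: "rep_GJ M e W" shows "rzero (ind M e W) = cls W z (rzero W)"
  by (simp add: ind_def cls_def ind_rel_eq[OF W])
lemma ind_act: assumes W: "rep_GJ M e W" shows "ract (ind M e W) m c = Rel W `` ((\<lambda>(x, w). (pm m x, w)) ` c)"
  by (simp add: ind_def ind_rel_eq[OF W])

lemma cls_in: assumes W: "rep_GJ M e W" shows "x \<in> PeE M e \<Longrightarrow> w \<in> rcar W \<Longrightarrow> cls W x w \<in> rcar (ind M e W)"
  unfolding cls_def ind_car[OF W] by (simp add: quotientI)

lemma ind_elim: assumes W: "rep_GJ M e W" and c: "c \<in> rcar (ind M e W)"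
  obtains x w where "x \<in> PeE M e" "w \<in> rcar W" "c = cls W x w"
  using c unfolding ind_car[OF W] cls_def by (auto elim!: quotientE)

lemma cls_eq: assumes W: "rep_GJ M e W" and "x \<in> PeE M e" "y \<in> PeE M e" "w \<in> rcar W" "v \<in> rcar W"
  shows "(cls W x w = cls W y v) = (((x, w), (y, v)) \<in> Rel W)"
  unfolding cls_def using eq_equiv_class_iff[OF Rel_equiv[OF W]] assms by simp

lemma cls_zero: assumes W: "rep_GJ M e W" and x: "x \<in> PeE M e" and w: "w \<in> rcar W"
  shows "(cls W x w = cls W z (rzero W)) = (x = z \<or> w = rzero W)"
  using cls_eq[OF W x z_PeE w rW_zero[OF W]] x w rW_zero[OF W] unfolding Rel_def by auto

lemma cls_nz: assumes W: "rep_GJ M e W" and x: "x \<in> PeE M e" and w: "w \<in> rcar W"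
  and nz: "cls W x w \<noteq> cls W z (rzero W)" shows "x \<in> Lset" "w \<noteq> rzero W"
  using cls_zero[OF W x w] nz PeE_Lset x by auto

lemma pm_resp: assumes W: "rep_GJ M e W" and m: "m \<in> C" and r: "((x, w), (y, v)) \<in> Rel W"
  shows "((pm m x, w), (pm m y, v)) \<in> Rel W"
proof -
  have mem: "x \<in> PeE M e" "y \<in> PeE M e" "w \<in> rcar W" "v \<in> rcar W" using Rel_dom[OF r] by auto
  have mem2: "pm m x \<in> PeE M e" "pm m y \<in> PeE M e" using pm_PeE m mem by auto
  show ?thesis
  proof (cases "(x = z \<or> w = rzero W) \<and> (y = z \<or> v = rzero W)")
    case True then show ?thesis using m mem mem2 by (intro Rel_zero) auto
  next
    case False
    then obtain a where a: "a \<in> GJ M e" "y = x \<cdot> a" "w = ract W a v" and nz: "x \<noteq> z" "w \<noteq> rzero W" "y \<noteq> z" "v \<noteq> rzero W"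
      using r unfolding Rel_def by auto
    have xL: "x \<in> Lset" using nz mem PeE_Lset by auto
    have C: "x \<in> C" "a \<in> C" using xL a Lset_C GJ_C by auto
    show ?thesis
    proof (cases "m \<cdot> x \<in> JJ")
      case True
      then have mxL: "m \<cdot> x \<in> Lset" using Lset_mul m xL by simp
      then have "m \<cdot> x \<cdot> a \<in> Lset" using Lset_GJ a by simp
      then have "m \<cdot> y \<in> JJ" "m \<cdot> y = m \<cdot> x \<cdot> a" using a C m Lset_def by (simp_all add: assoc)
      then have "pm m y = pm m x \<cdot> a" "pm m x = m \<cdot> x" using True by (simp_all add: pmul_eq)
      moreover have "m \<cdot> x \<cdot> a \<noteq> z" "m \<cdot> x \<noteq> z" using Lset_nz[OF Lset_GJ[OF mxL a(1)]] Lset_nz[OF mxL] by auto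
      ultimately show ?thesis using mem2 mem nz a unfolding Rel_def by auto
    next
      case False
      have "m \<cdot> y \<notin> JJ"
      proof
        assume my: "m \<cdot> y \<in> JJ"
        obtain b where b: "b \<in> GJ M e" "a \<cdot> b = e" using GJ_inv a by blast
        have yL: "y \<in> Lset" using Lset_GJ xL a by simp
        have "m \<cdot> y \<in> Lset" using Lset_mul m yL my by simp
        then have "m \<cdot> y \<cdot> b \<in> Lset" using Lset_GJ b by simp
        moreover have "m \<cdot> y \<cdot> b = m \<cdot> x"
          using a b C m GJ_C xL unfolding Lset_def by (simp add: assoc)
        ultimately show False using False Lset_def by simp
      qed
      then have "pm m y = z" "pm m x = z" using False by (simp_all add: pmul_eq)
      then show ?thesis using mem by (intro Rel_zero) auto
    qed
  qed
qed

lemma act_cls: assumes W: "rep_GJ M e W" and m: "m \<in> C" and x: "x \<in> PeE M e" and w: "w \<in> rcar W"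
  shows "ract (ind M e W) m (cls W x w) = cls W (pm m x) w"
proof -
  let ?f = "\<lambda>(x, w). (pm m x, w)"
  have f: "(?f p, ?f q) \<in> Rel W" if "(p, q) \<in> Rel W" for p q
  proof -
    obtain x1 w1 y1 v1 where "p = (x1, w1)" "q = (y1, v1)" by (metis prod.collapse)
    then show ?thesis using pm_resp[OF W m] that by simp
  qed
  have "ract (ind M e W) m (cls W x w) = Rel W `` (?f ` (Rel W `` {(x, w)}))"
    using ind_act[OF W] unfolding cls_def by simp
  also have "\<dots> = Rel W `` {?f (x, w)}"
    by (rule equiv_img[OF Rel_equiv[OF W]]) (use f x w in auto)
  finally show ?thesis unfolding cls_def by simp
qed

lemma act_cl: assumes W: "rep_GJ M e W" and m: "m \<in> C" and c: "c \<in> rcar (ind M e W)"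
  shows "ract (ind M e W) m c \<in> rcar (ind M e W)"
proof -
  obtain x w where xw: "x \<in> PeE M e" "w \<in> rcar W" "c = cls W x w" using ind_elim[OF W c] by blast
  show ?thesis using act_cls[OF W m xw(1,2)] xw pm_PeE[OF m xw(1)] cls_in[OF W] by simp
qed

lemma act_comp: assumes W: "rep_GJ M e W" and m: "m \<in> C" and n: "n \<in> C" and c: "c \<in> rcar (ind M e W)"
  shows "ract (ind M e W) (m \<cdot> n) c = ract (ind M e W) m (ract (ind M e W) n c)"
proof -
  obtain x w where xw: "x \<in> PeE M e" "w \<in> rcar W" "c = cls W x w" using ind_elim[OF W c] by blast
  show ?thesis using act_cls[OF W _ xw(1,2)] act_cls[OF W m pm_PeE[OF n xw(1)] xw(2)] pm_comp[OF m n xw(1)] xw m n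
    by simp
qed

lemma act_one: assumes W: "rep_GJ M e W" and c: "c \<in> rcar (ind M e W)"
  shows "ract (ind M e W) one c = c"
proof -
  obtain x w where xw: "x \<in> PeE M e" "w \<in> rcar W" "c = cls W x w" using ind_elim[OF W c] by blast
  show ?thesis using act_cls[OF W one_C xw(1,2)] pm_one[OF xw(1)] xw by simp
qed

lemma act_zm: assumes W: "rep_GJ M e W" and c: "c \<in> rcar (ind M e W)"
  shows "ract (ind M e W) z c = rzero (ind M e W)"
proof -
  obtain x w where xw: "x \<in> PeE M e" "w \<in> rcar W" "c = cls W x w" using ind_elim[OF W c] by blast
  have "cls W z w = cls W z (rzero W)" using cls_zero[OF W z_PeE xw(2)] by simp
  then show ?thesis using act_cls[OF W z_C xw(1,2)] pm_zm[OF xw(1)] xw ind_zero[OF W] by simp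
qed

lemma act_z: assumes W: "rep_GJ M e W" and m: "m \<in> C"
  shows "ract (ind M e W) m (rzero (ind M e W)) = rzero (ind M e W)"
  using act_cls[OF W m z_PeE rW_zero[OF W]] ind_zero[OF W] m by simp

lemma ind_free: assumes W: "rep_GJ M e W" and g: "g \<in> G" and c: "c \<in> rcar (ind M e W)"
  and nz: "c \<noteq> rzero (ind M e W)" and eq: "ract (ind M e W) g c = c" shows "g = one"
proof -
  obtain x w where xw: "x \<in> PeE M e" "w \<in> rcar W" "c = cls W x w" using ind_elim[OF W c] by blast
  have nz': "cls W x w \<noteq> cls W z (rzero W)" using nz xw ind_zero[OF W] by simp
  have xL: "x \<in> Lset" and wnz: "w \<noteq> rzero W" using cls_nz[OF W xw(1,2) nz'] by auto
  have gC: "g \<in> C" using GC g by simp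
  have xC: "x \<in> C" using xL Lset_C by simp
  have gxL: "g \<cdot> x \<in> Lset" using Lset_G xL g by simp
  then have "pm g x = g \<cdot> x" using Lset_def pmul_eq by simp
  then have "cls W (g \<cdot> x) w = cls W x w" using eq act_cls[OF W gC xw(1,2)] xw by simp
  then have r: "((g \<cdot> x, w), (x, w)) \<in> Rel W" using cls_eq[OF W Lset_PeE[OF gxL] xw(1) xw(2) xw(2)] by simp
  then obtain a where a: "a \<in> GJ M e" "x = g \<cdot> x \<cdot> a" "w = ract W a w"
    using Lset_nz[OF gxL] wnz unfolding Rel_def by auto
  have aC: "a \<in> C" using a GJ_C by simp
  obtain u where u: "u \<in> C" "u \<cdot> x = e" using L1 xL Lset_def by blast
  have "e = u \<cdot> (g \<cdot> x \<cdot> a)" using u a by simp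
  also have "\<dots> = (u \<cdot> g) \<cdot> x \<cdot> a" using u gC xC aC by (simp add: assoc)
  also have "\<dots> = (g \<cdot> u) \<cdot> x \<cdot> a" using Gcomm[OF g u(1)] by simp
  also have "\<dots> = g \<cdot> (u \<cdot> x) \<cdot> a" using u gC xC aC by (simp add: assoc)
  also have "\<dots> = g \<cdot> a" using u gC aC GJ_le[OF a(1)] by (simp add: assoc)
  finally have ega: "e = g \<cdot> a" .
  obtain h where h: "h \<in> G" "h \<cdot> g = one" "g \<cdot> h = one" using Ginv'[OF g] by blast
  have hC: "h \<in> C" using GC h by simp
  have "h \<cdot> e = h \<cdot> g \<cdot> a" using ega hC gC aC by (simp add: assoc)
  then have "a = h \<cdot> e" using h aC by simp
  then have "h = one" using rW_free[OF W h(1) xw(2) wnz] a by simp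
  then show ?thesis using h gC by simp
qed

lemma ind_vobj: assumes W: "rep_GJ M e W" shows "vect_obj M (ind M e W)"
proof -
  have fPeE: "finite (PeE M e)" using PeE_eq Lset_C fin finite_subset by (metis insert_subset subsetI z_C finite_insert)
  have "finite (rcar (ind M e W))" unfolding ind_car[OF W]
    using finite_quotient[OF _ equiv_type[OF Rel_equiv[OF W]]] fPeE rW_fin[OF W] by simp
  moreover have "rzero (ind M e W) \<in> rcar (ind M e W)" using ind_zero[OF W] cls_in[OF W z_PeE rW_zero[OF W]] by simp
  moreover have "\<forall>g\<in>G. \<forall>v\<in>rcar (ind M e W). ract (ind M e W) g v \<in> rcar (ind M e W)"
    using act_cl[OF W] GC by simp
  moreover have "\<forall>v\<in>rcar (ind M e W). ract (ind M e W) one v = v" using act_one[OF W] by simp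
  moreover have "\<forall>g\<in>G. \<forall>h\<in>G. \<forall>v\<in>rcar (ind M e W). ract (ind M e W) (g \<cdot> h) v = ract (ind M e W) g (ract (ind M e W) h v)"
    using act_comp[OF W] GC by simp
  moreover have "\<forall>g\<in>G. ract (ind M e W) g (rzero (ind M e W)) = rzero (ind M e W)"
    using act_z[OF W] GC by simp
  moreover have "\<forall>g\<in>G. \<forall>v\<in>rcar (ind M e W). v \<noteq> rzero (ind M e W) \<and> ract (ind M e W) g v = v \<longrightarrow> g = one"
    using ind_free[OF W] by blast
  ultimately show ?thesis unfolding vect_obj_def by blast
qed

lemma ind_orbit: assumes W: "rep_GJ M e W" and m: "m \<in> C" and c1: "c1 \<in> rcar (ind M e W)" and c2: "c2 \<in> rcar (ind M e W)"
  and eq: "ract (ind M e W) m c1 = ract (ind M e W) m c2" and nz: "ract (ind M e W) m c1 \<noteq> rzero (ind M e W)"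
  shows "orbit M (ind M e W) c1 = orbit M (ind M e W) c2"
proof -
  obtain x w where xw: "x \<in> PeE M e" "w \<in> rcar W" "c1 = cls W x w" using ind_elim[OF W c1] by blast
  obtain y v where yv: "y \<in> PeE M e" "v \<in> rcar W" "c2 = cls W y v" using ind_elim[OF W c2] by blast
  have e1: "ract (ind M e W) m c1 = cls W (pm m x) w" using act_cls[OF W m xw(1,2)] xw by simp
  have e2: "ract (ind M e W) m c2 = cls W (pm m y) v" using act_cls[OF W m yv(1,2)] yv by simp
  have P: "pm m x \<in> PeE M e" "pm m y \<in> PeE M e" using pm_PeE m xw yv by auto
  have nz1: "cls W (pm m x) w \<noteq> cls W z (rzero W)" using nz e1 ind_zero[OF W] by simp
  have r: "((pm m x, w), (pm m y, v)) \<in> Rel W" using eq e1 e2 cls_eq[OF W P xw(2) yv(2)] by simp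
  have pxL: "pm m x \<in> Lset" and wnz: "w \<noteq> rzero W" using cls_nz[OF W P(1) xw(2) nz1] by auto
  then obtain a where a: "a \<in> GJ M e" "pm m y = pm m x \<cdot> a" "w = ract W a v" and pynz: "pm m y \<noteq> z"
    using r Lset_nz[OF pxL] unfolding Rel_def by auto
  have xnz: "x \<noteq> z" using Lset_nz[OF pxL] m by auto
  have ynz: "y \<noteq> z" using pynz m by auto
  have xL: "x \<in> Lset" and yL: "y \<in> Lset" using xnz ynz xw yv PeE_Lset by auto
  have C: "x \<in> C" "y \<in> C" "a \<in> C" using xL yL Lset_C a GJ_C by auto
  have mxJ: "m \<cdot> x \<in> JJ" using Lset_nz[OF pxL] by (auto simp: pmul_eq split: if_splits)
  have myJ: "m \<cdot> y \<in> JJ" using pynz by (auto simp: pmul_eq split: if_splits)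
  have xaL: "x \<cdot> a \<in> Lset" using Lset_GJ xL a by simp
  have "m \<cdot> (x \<cdot> a) = pm m y" using a mxJ C m by (simp add: pmul_eq assoc)
  then have "pm m (x \<cdot> a) = pm m y" using myJ by (simp add: pmul_eq split: if_splits)
  moreover have "pm m (x \<cdot> a) \<noteq> z" using calculation pynz by simp
  ultimately obtain g where g: "g \<in> G" "y = g \<cdot> (x \<cdot> a)" using LIx[OF m Lset_PeE[OF xaL] yv(1)] by blast
  have gC: "g \<in> C" using GC g by simp
  have "g \<cdot> (x \<cdot> a) \<in> Lset" using Lset_G xaL g by simp
  then have pg: "pm g (x \<cdot> a) = g \<cdot> (x \<cdot> a)" using Lset_def pmul_eq by simp
  have eqc: "cls W (x \<cdot> a) v = cls W x w"
    using Rel_gen1[OF W xL a(1) yv(2)] a(3) cls_eq[OF W xw(1) Lset_PeE[OF xaL] xw(2) yv(2)] by simp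
  have "c2 = cls W (pm g (x \<cdot> a)) v" using yv g pg by simp
  also have "\<dots> = ract (ind M e W) g (cls W (x \<cdot> a) v)" using act_cls[OF W gC Lset_PeE[OF xaL] yv(2)] by simp
  also have "\<dots> = ract (ind M e W) g c1" using eqc xw by simp
  finally have "c2 = ract (ind M e W) g c1" .
  then show ?thesis using orbit_shift[OF ind_vobj[OF W] c1 g(1)] by simp
qed

lemma ind_vmorph: assumes W: "rep_GJ M e W" and m: "m \<in> C"
  shows "vect_morph M (ind M e W) (ind M e W) (ract (ind M e W) m)"
proof -
  have "\<forall>g\<in>G. \<forall>v\<in>rcar (ind M e W). ract (ind M e W) m (ract (ind M e W) g v) = ract (ind M e W) g (ract (ind M e W) m v)"
  proof (intro ballI)
    fix g v assume g: "g \<in> G" and v: "v \<in> rcar (ind M e W)"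
    have gC: "g \<in> C" using GC g by simp
    have "ract (ind M e W) m (ract (ind M e W) g v) = ract (ind M e W) (m \<cdot> g) v" using act_comp[OF W m gC v] by simp
    also have "\<dots> = ract (ind M e W) (g \<cdot> m) v" using Gcomm[OF g m] by simp
    also have "\<dots> = ract (ind M e W) g (ract (ind M e W) m v)" using act_comp[OF W gC m v] by simp
    finally show "ract (ind M e W) m (ract (ind M e W) g v) = ract (ind M e W) g (ract (ind M e W) m v)" .
  qed
  then show ?thesis unfolding vect_morph_def using act_cl[OF W m] act_z[OF W m] ind_orbit[OF W m] by blast
qed

lemma ind_rep: assumes W: "rep_GJ M e W" shows "rep_M M (ind M e W)"
  unfolding rep_M_def using ind_vobj[OF W] ind_vmorph[OF W] act_comp[OF W] act_one[OF W] act_zm[OF W] by blast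

end

context ctx begin

lemma vect_morph_inj:
  assumes "\<forall>v\<in>rcar V. f v \<in> rcar W" "f (rzero V) = rzero W"
    "\<forall>g\<in>G. \<forall>v\<in>rcar V. f (ract V g v) = ract W g (f v)" "inj_on f (rcar V)"
  shows "vect_morph M V W f"
  using assms unfolding vect_morph_def inj_on_def by blast

lemma rM_cl: assumes V: "rep_M M V" and m: "m \<in> C" and v: "v \<in> rcar V" shows "ract V m v \<in> rcar V"
proof -
  have "vect_morph M V V (ract V m)" using rM2[OF V] m by blast
  then show ?thesis using vmor1 v by blast
qed
lemma rM_z: assumes V: "rep_M M V" and m: "m \<in> C" shows "ract V m (rzero V) = rzero V"
proof -
  have "vect_morph M V V (ract V m)" using rM2[OF V] m by blast
  then show ?thesis using vmor2 by blast
qed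
lemma rM_comp: assumes V: "rep_M M V" and m: "m \<in> C" and n: "n \<in> C" and v: "v \<in> rcar V"
  shows "ract V (m \<cdot> n) v = ract V m (ract V n v)"
  using rM3[OF V] m n v by blast
lemma rM_one: assumes V: "rep_M M V" and v: "v \<in> rcar V" shows "ract V one v = v"
  using rM4[OF V] v by blast
lemma rM_zm: assumes V: "rep_M M V" and v: "v \<in> rcar V" shows "ract V z v = rzero V"
  using rM5[OF V] v by blast
lemma rM_zero: assumes V: "rep_M M V" shows "rzero V \<in> rcar V"
  using vobj2[OF rM1[OF V]] .
lemma rM_fin: assumes V: "rep_M M V" shows "finite (rcar V)"
  using vobj1[OF rM1[OF V]] .
lemma rM_free: assumes V: "rep_M M V" and g: "g \<in> G" and v: "v \<in> rcar V" "v \<noteq> rzero V" "ract V g v = v"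
  shows "g = one"
  using vobj7[OF rM1[OF V]] g v by blast
lemma rM_orbit: assumes V: "rep_M M V" and m: "m \<in> C" and v: "v1 \<in> rcar V" "v2 \<in> rcar V"
  and eq: "ract V m v1 = ract V m v2" "ract V m v1 \<noteq> rzero V"
  shows "orbit M V v1 = orbit M V v2"
proof -
  have "vect_morph M V V (ract V m)" using rM2[OF V] m by blast
  from vmor4[OF this] show ?thesis using v eq by blast
qed

lemma N_subrep: assumes V: "rep_M M V" shows "subrep_M M V (Nset M e V)"
proof -
  have closed: "ract V m c \<in> Nset M e V" if m: "m \<in> C" and c: "c \<in> Nset M e V" for m c
  proof -
    have cV: "c \<in> rcar V" using c unfolding Nset_def by simp
    have "ract V (e \<cdot> n) (ract V m c) = rzero V" if n: "n \<in> C" for n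
    proof -
      have "ract V (e \<cdot> n) (ract V m c) = ract V (e \<cdot> (n \<cdot> m)) c"
        using rM_comp[OF V _ m cV, of "e \<cdot> n"] n m by (simp add: assoc)
      also have "\<dots> = rzero V" using c n m unfolding Nset_def by simp
      finally show ?thesis .
    qed
    then show ?thesis unfolding Nset_def using rM_cl[OF V m cV] by simp
  qed
  have "rzero V \<in> Nset M e V" unfolding Nset_def using rM_zero[OF V] rM_z[OF V] by simp
  then show ?thesis unfolding subrep_M_def using closed GC by (auto simp: Nset_def)
qed

lemma subrep_zero: "subrep_M M V S \<Longrightarrow> rzero V \<in> S" unfolding subrep_M_def by blast
lemma subrep_sub: "subrep_M M V S \<Longrightarrow> S \<subseteq> rcar V" unfolding subrep_M_def by blast
lemma subrep_cl: "subrep_M M V S \<Longrightarrow> m \<in> C \<Longrightarrow> v \<in> S \<Longrightarrow> ract V m v \<in> S" unfolding subrep_M_def by blast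

lemma quot_simps[simp]: "rcar (quot V S) = (rcar V - S) \<union> {rzero V}" "rzero (quot V S) = rzero V"
  "ract (quot V S) m v = (if ract V m v \<in> S then rzero V else ract V m v)"
  unfolding quot_def by simp_all

lemma quot_rep: assumes V: "rep_M M V" and S: "subrep_M M V S" shows "rep_M M (quot V S)"
proof -
  let ?Q = "quot V S"
  have zS: "rzero V \<in> S" using subrep_zero[OF S] .
  have QV: "rcar ?Q \<subseteq> rcar V" using rM_zero[OF V] by auto
  have cl: "ract ?Q m v \<in> rcar ?Q" if "m \<in> C" "v \<in> rcar ?Q" for m v
    using rM_cl[OF V that(1)] that QV by auto
  have comp: "ract ?Q (m \<cdot> n) v = ract ?Q m (ract ?Q n v)" if m: "m \<in> C" and n: "n \<in> C" and v: "v \<in> rcar ?Q" for m n v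
  proof -
    have vV: "v \<in> rcar V" using v QV by auto
    have mn: "ract V (m \<cdot> n) v = ract V m (ract V n v)" using rM_comp[OF V m n vV] .
    show ?thesis
    proof (cases "ract V n v \<in> S")
      case True
      then have "ract V (m \<cdot> n) v \<in> S" using mn subrep_cl[OF S m] by simp
      then show ?thesis using True rM_z[OF V m] zS by simp
    next
      case False then show ?thesis using mn by simp
    qed
  qed
  have one: "ract ?Q one v = v" if "v \<in> rcar ?Q" for v
    using that rM_one[OF V] QV zS by auto
  have zQ: "ract ?Q m (rzero ?Q) = rzero ?Q" if "m \<in> C" for m using rM_z[OF V that] by simp
  have notS: "v \<notin> S" if "v \<in> rcar ?Q" "v \<noteq> rzero ?Q" for v using that by auto
  have gS: "ract V g v \<notin> S" if g: "g \<in> G" and v: "v \<in> rcar V" "v \<notin> S" for g v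
  proof
    assume "ract V g v \<in> S"
    obtain h where h: "h \<in> G" "h \<cdot> g = one" using Ginv'[OF g] by blast
    have "ract V h (ract V g v) \<in> S" using subrep_cl[OF S GC[OF h(1)]] \<open>ract V g v \<in> S\<close> by simp
    moreover have "ract V h (ract V g v) = v" using rM_comp[OF V GC[OF h(1)] GC[OF g] v(1)] h rM_one[OF V v(1)] by simp
    ultimately show False using v by simp
  qed
  have orbQ: "orbit M ?Q v = orbit M V v" if "v \<in> rcar V" "v \<notin> S" for v
    unfolding orbit_def using gS[OF _ that] by auto
  have vo: "vect_obj M ?Q"
  proof -
    have "finite (rcar ?Q)" using rM_fin[OF V] by simp
    moreover have "rzero ?Q \<in> rcar ?Q" by simp
    moreover have "\<forall>g\<in>G. \<forall>v\<in>rcar ?Q. ract ?Q g v \<in> rcar ?Q" using cl GC by blast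
    moreover have "\<forall>v\<in>rcar ?Q. ract ?Q one v = v" using one by blast
    moreover have "\<forall>g\<in>G. \<forall>h\<in>G. \<forall>v\<in>rcar ?Q. ract ?Q (g \<cdot> h) v = ract ?Q g (ract ?Q h v)" using comp GC by blast
    moreover have "\<forall>g\<in>G. ract ?Q g (rzero ?Q) = rzero ?Q" using zQ GC by blast
    moreover have "\<forall>g\<in>G. \<forall>v\<in>rcar ?Q. v \<noteq> rzero ?Q \<and> ract ?Q g v = v \<longrightarrow> g = one"
    proof (intro ballI impI)
      fix g v assume g: "g \<in> G" and v: "v \<in> rcar ?Q" and h: "v \<noteq> rzero ?Q \<and> ract ?Q g v = v"
      have vV: "v \<in> rcar V" "v \<notin> S" "v \<noteq> rzero V" using v h by auto
      then have "ract V g v = v" using h gS[OF g vV(1,2)] by simp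
      then show "g = one" using rM_free[OF V g vV(1,3)] by simp
    qed
    ultimately show ?thesis unfolding vect_obj_def by blast
  qed
  have vm: "vect_morph M ?Q ?Q (ract ?Q m)" if m: "m \<in> C" for m
  proof -
    have "\<forall>v\<in>rcar ?Q. ract ?Q m v \<in> rcar ?Q" using cl m by blast
    moreover have "ract ?Q m (rzero ?Q) = rzero ?Q" using zQ m by blast
    moreover have "\<forall>g\<in>G. \<forall>v\<in>rcar ?Q. ract ?Q m (ract ?Q g v) = ract ?Q g (ract ?Q m v)"
    proof (intro ballI)
      fix g v assume g: "g \<in> G" and v: "v \<in> rcar ?Q"
      have "ract ?Q m (ract ?Q g v) = ract ?Q (m \<cdot> g) v" using comp[OF m GC[OF g] v] by simp
      also have "\<dots> = ract ?Q (g \<cdot> m) v" using Gcomm[OF g m] by simp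
      also have "\<dots> = ract ?Q g (ract ?Q m v)" using comp[OF GC[OF g] m v] by simp
      finally show "ract ?Q m (ract ?Q g v) = ract ?Q g (ract ?Q m v)" .
    qed
    moreover have "\<forall>v1\<in>rcar ?Q. \<forall>v2\<in>rcar ?Q. ract ?Q m v1 = ract ?Q m v2 \<and> ract ?Q m v1 \<noteq> rzero ?Q
       \<longrightarrow> orbit M ?Q v1 = orbit M ?Q v2"
    proof (intro ballI impI)
      fix v1 v2 assume v1: "v1 \<in> rcar ?Q" and v2: "v2 \<in> rcar ?Q"
        and h: "ract ?Q m v1 = ract ?Q m v2 \<and> ract ?Q m v1 \<noteq> rzero ?Q"
      have n1: "ract V m v1 \<notin> S" "ract V m v2 \<notin> S" using h by (auto split: if_splits)
      then have eq: "ract V m v1 = ract V m v2" "ract V m v1 \<noteq> rzero V" using h zS by auto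
      have vV: "v1 \<in> rcar V" "v2 \<in> rcar V" using v1 v2 QV by auto
      have "v1 \<notin> S"
      proof
        assume "v1 \<in> S" then have "ract V m v1 \<in> S" using subrep_cl[OF S m] by simp
        then show False using n1 by simp
      qed
      moreover have "v2 \<notin> S"
      proof
        assume "v2 \<in> S" then have "ract V m v2 \<in> S" using subrep_cl[OF S m] by simp
        then show False using n1 by simp
      qed
      ultimately show "orbit M ?Q v1 = orbit M ?Q v2"
        using orbQ vV rM_orbit[OF V m vV eq] by simp
    qed
    ultimately show ?thesis unfolding vect_morph_def by blast
  qed
  have "\<forall>v\<in>rcar ?Q. ract ?Q z v = rzero ?Q" using rM_zm[OF V] QV zS by auto
  then show ?thesis unfolding rep_M_def using vo vm comp one by blast
qed

lemma iso_GJ_sym: "iso_GJ M e V W \<Longrightarrow> iso_GJ M e W V"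
  unfolding iso_GJ_def by blast
lemma iso_M_sym: "iso_M M V W \<Longrightarrow> iso_M M W V"
  unfolding iso_M_def by blast

lemma iso_GJ_bij: assumes V: "rep_GJ M e V" and f: "morph_GJ M e V W f"
  and b: "bij_betw f (rcar V) (rcar W)" shows "iso_GJ M e V W"
proof -
  define g where "g = inv_into (rcar V) f"
  have fV: "vect_morph M (scal M e V) (scal M e W) f" using f unfolding morph_GJ_def by blast
  have fa: "\<forall>a\<in>hatGJ M e. \<forall>v\<in>rcar V. f (ract V a v) = ract W a (f v)" using f unfolding morph_GJ_def by blast
  have inj: "inj_on f (rcar V)" using b bij_betw_def by blast
  have gW: "g w \<in> rcar V" if "w \<in> rcar W" for w
    using that b unfolding g_def by (metis bij_betw_def inv_into_into)
  have fg: "f (g w) = w" if "w \<in> rcar W" for w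
    using that b unfolding g_def by (metis bij_betw_def f_inv_into_f)
  have gf: "g (f v) = v" if "v \<in> rcar V" for v
    using that inj unfolding g_def by (simp add: inv_into_f_f)
  have ga: "g (ract W a w) = ract V a (g w)" if a: "a \<in> hatGJ M e" and w: "w \<in> rcar W" for a w
  proof -
    have "ract V a (g w) \<in> rcar V" using rW_cl[OF V a gW[OF w]] .
    then have "g (f (ract V a (g w))) = ract V a (g w)" using gf by blast
    moreover have "f (ract V a (g w)) = ract W a w" using fa a gW[OF w] fg[OF w] by simp
    ultimately show ?thesis by simp
  qed
  have f0: "f (rzero V) = rzero W" using vmor2[OF fV] by simp
  have gm: "morph_GJ M e W V g"
  proof -
    have "vect_morph M (scal M e W) (scal M e V) g"
    proof (rule vect_morph_inj)
      show "\<forall>v\<in>rcar (scal M e W). g v \<in> rcar (scal M e V)" using gW by simp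
      show "g (rzero (scal M e W)) = rzero (scal M e V)" using gf[OF rW_zero[OF V]] f0 by simp
      show "\<forall>h\<in>G. \<forall>v\<in>rcar (scal M e W). g (ract (scal M e W) h v) = ract (scal M e V) h (g v)"
        using ga GJ_hat GeGJ by simp
      show "inj_on g (rcar (scal M e W))" using fg unfolding inj_on_def by (metis scal_simps(1))
    qed
    then show ?thesis unfolding morph_GJ_def using ga by blast
  qed
  show ?thesis unfolding iso_GJ_def using f gm gf fg by blast
qed

lemma iso_M_bij: assumes V: "rep_M M V" and f: "morph_M M V W f"
  and b: "bij_betw f (rcar V) (rcar W)" shows "iso_M M V W"
proof -
  define g where "g = inv_into (rcar V) f"
  have fV: "vect_morph M V W f" using f unfolding morph_M_def by blast
  have fa: "\<forall>a\<in>C. \<forall>v\<in>rcar V. f (ract V a v) = ract W a (f v)" using f unfolding morph_M_def by blast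
  have inj: "inj_on f (rcar V)" using b bij_betw_def by blast
  have gW: "g w \<in> rcar V" if "w \<in> rcar W" for w
    using that b unfolding g_def by (metis bij_betw_def inv_into_into)
  have fg: "f (g w) = w" if "w \<in> rcar W" for w
    using that b unfolding g_def by (metis bij_betw_def f_inv_into_f)
  have gf: "g (f v) = v" if "v \<in> rcar V" for v
    using that inj unfolding g_def by (simp add: inv_into_f_f)
  have ga: "g (ract W a w) = ract V a (g w)" if a: "a \<in> C" and w: "w \<in> rcar W" for a w
  proof -
    have "ract V a (g w) \<in> rcar V" using rM_cl[OF V a gW[OF w]] .
    then have "g (f (ract V a (g w))) = ract V a (g w)" using gf by blast
    moreover have "f (ract V a (g w)) = ract W a w" using fa a gW[OF w] fg[OF w] by simp
    ultimately show ?thesis by simp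
  qed
  have f0: "f (rzero V) = rzero W" using vmor2[OF fV] by simp
  have gm: "morph_M M W V g"
  proof -
    have "vect_morph M W V g"
    proof (rule vect_morph_inj)
      show "\<forall>v\<in>rcar W. g v \<in> rcar V" using gW by simp
      show "g (rzero W) = rzero V" using gf[OF rM_zero[OF V]] f0 by simp
      show "\<forall>h\<in>G. \<forall>v\<in>rcar W. g (ract W h v) = ract V h (g v)"
        using ga GC by simp
      show "inj_on g (rcar W)" using fg unfolding inj_on_def by metis
    qed
    then show ?thesis unfolding morph_M_def using ga by blast
  qed
  show ?thesis unfolding iso_M_def using f gm gf fg by blast
qed

end

context ctx begin

lemma sGJ_rep: "simple_GJ M e W \<Longrightarrow> rep_GJ M e W" unfolding simple_GJ_def by blast
lemma sGJ_ex: assumes "simple_GJ M e W" obtains w where "w \<in> rcar W" "w \<noteq> rzero W"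
proof -
  have "rcar W \<noteq> {rzero W}" "rzero W \<in> rcar W" using assms rW_zero[OF sGJ_rep[OF assms]] unfolding simple_GJ_def by auto
  then show ?thesis using that by blast
qed
lemma sGJ_sub: "simple_GJ M e W \<Longrightarrow> subrep_GJ M e W S \<Longrightarrow> S = {rzero W} \<or> S = rcar W"
  unfolding simple_GJ_def by blast

lemma pm_x_e: "x \<in> Lset \<Longrightarrow> pm x e = x" unfolding Lset_def by (simp add: pmul_eq)

lemma act_e_cls: assumes W: "rep_GJ M e W" and w: "w \<in> rcar W"
  shows "ract (ind M e W) e (cls W e w) = cls W e w"
  using act_cls[OF W eC Lset_PeE[OF e_Lset] w] pm_x_e[OF e_Lset] by simp

lemma cls_e_zero: assumes W: "rep_GJ M e W" and w: "w \<in> rcar W"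
  shows "(cls W e w = rzero (ind M e W)) = (w = rzero W)"
  using cls_zero[OF W Lset_PeE[OF e_Lset] w] ind_zero[OF W] enz by simp

lemma cls_e_notN: assumes W: "rep_GJ M e W" and w: "w \<in> rcar W" "w \<noteq> rzero W"
  shows "cls W e w \<notin> Nset M e (ind M e W)"
proof
  assume "cls W e w \<in> Nset M e (ind M e W)"
  then have "\<forall>m\<in>C. ract (ind M e W) (e \<cdot> m) (cls W e w) = rzero (ind M e W)" unfolding Nset_def by blast
  then have "ract (ind M e W) (e \<cdot> one) (cls W e w) = rzero (ind M e W)" using one_C by blast
  then show False using act_e_cls[OF W w(1)] cls_e_zero[OF W w(1)] w by simp
qed

lemma x_shift: assumes W: "rep_GJ M e W" and x: "x \<in> Lset" and w: "w \<in> rcar W"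
  shows "ract (ind M e W) x (cls W e w) = cls W x w"
  using act_cls[OF W Lset_C[OF x] Lset_PeE[OF e_Lset] w] pm_x_e[OF x] by simp

lemma e_shift: assumes W: "rep_GJ M e W" and a: "a \<in> GJ M e" and w: "w \<in> rcar W"
  shows "ract (ind M e W) a (cls W e w) = cls W e (ract W a w)"
proof -
  have "ract (ind M e W) a (cls W e w) = cls W a w" using x_shift[OF W GJ_Lset[OF a] w] .
  also have "\<dots> = cls W e (ract W a w)"
    using Rel_gen1[OF W e_Lset a w] GJ_le[OF a] cls_eq[OF W Lset_PeE[OF e_Lset] Lset_PeE[OF GJ_Lset[OF a]] rW_clG[OF W a w] w]
    by simp
  finally show ?thesis .
qed

lemma N_max: assumes sW: "simple_GJ M e W" and S: "subrep_M M (ind M e W) S" and ne: "S \<noteq> rcar (ind M e W)"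
  shows "S \<subseteq> Nset M e (ind M e W)"
proof (rule ccontr)
  let ?I = "ind M e W"
  have W: "rep_GJ M e W" using sGJ_rep[OF sW] .
  assume "\<not> S \<subseteq> Nset M e ?I"
  then obtain c where c: "c \<in> S" "c \<notin> Nset M e ?I" by blast
  have cI: "c \<in> rcar ?I" using c subrep_sub[OF S] by blast
  then obtain m where m: "m \<in> C" "ract ?I (e \<cdot> m) c \<noteq> rzero ?I" using c unfolding Nset_def by blast
  obtain x w where xw: "x \<in> PeE M e" "w \<in> rcar W" "c = cls W x w" using ind_elim[OF W cI] by blast
  have emC: "e \<cdot> m \<in> C" using m by simp
  have eq1: "ract ?I (e \<cdot> m) c = cls W (pm (e \<cdot> m) x) w" using act_cls[OF W emC xw(1,2)] xw by simp
  have nz1: "cls W (pm (e \<cdot> m) x) w \<noteq> cls W z (rzero W)" using m eq1 ind_zero[OF W] by simp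
  have yL: "pm (e \<cdot> m) x \<in> Lset" and wnz: "w \<noteq> rzero W"
    using cls_nz[OF W pm_PeE[OF emC xw(1)] xw(2) nz1] by auto
  define y where "y = pm (e \<cdot> m) x"
  have yC: "y \<in> C" using yL Lset_C y_def by simp
  have ey: "e \<cdot> y = y"
  proof -
    have "y \<noteq> z" using Lset_nz yL y_def by simp
    then have "y = e \<cdot> m \<cdot> x" unfolding y_def by (simp add: pmul_eq split: if_splits)
    then show ?thesis using m xw PeE_C by (simp add: assoc)
  qed
  have yG: "y \<in> GJ M e" using GJ_iff yL ey unfolding y_def Lset_def by simp
  have "cls W e (ract W y w) = ract ?I y (cls W e w)" using e_shift[OF W yG xw(2)] by simp
  also have "cls W e (ract W y w) = cls W y w" using e_shift[OF W yG xw(2)] x_shift[OF W GJ_Lset[OF yG] xw(2)] by simp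
  finally have "cls W e (ract W y w) = ract ?I (e \<cdot> m) c" using eq1 y_def e_shift[OF W yG xw(2)] x_shift[OF W GJ_Lset[OF yG] xw(2)] by simp
  then have inS: "cls W e (ract W y w) \<in> S" using subrep_cl[OF S emC c(1)] by simp
  define T where "T = {v \<in> rcar W. cls W e v \<in> S}"
  have zT: "rzero W \<in> T" unfolding T_def using rW_zero[OF W] cls_e_zero[OF W rW_zero[OF W]] subrep_zero[OF S] by simp
  have Tcl: "ract W a v \<in> T" if a: "a \<in> GJ M e" and v: "v \<in> T" for a v
  proof -
    have vW: "v \<in> rcar W" "cls W e v \<in> S" using v T_def by auto
    have "cls W e (ract W a v) \<in> S" using e_shift[OF W a vW(1)] subrep_cl[OF S GJ_C[OF a] vW(2)] by simp
    then show ?thesis unfolding T_def using rW_clG[OF W a vW(1)] by simp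
  qed
  have "subrep_GJ M e W T"
    unfolding subrep_GJ_def
  proof (intro conjI ballI)
    show "T \<subseteq> rcar W" unfolding T_def by auto
    show "rzero W \<in> T" by (rule zT)
    show "ract (scal M e W) g v \<in> T" if "g \<in> G" "v \<in> T" for g v
      using Tcl[OF GeGJ[OF that(1)] that(2)] by simp
    show "ract W a v \<in> T" if "a \<in> hatGJ M e" "v \<in> T" for a v
    proof (cases "a = z")
      case True then show ?thesis using zT that rW_zm[OF W] unfolding T_def by auto
    next
      case False then show ?thesis using Tcl that hatGJ_iff by auto
    qed
  qed
  then have "T = {rzero W} \<or> T = rcar W" using sGJ_sub[OF sW] by blast
  moreover have "ract W y w \<in> T" "ract W y w \<noteq> rzero W"
    using inS rW_clG[OF W yG xw(2)] rW_nz[OF W yG xw(2) wnz] unfolding T_def by auto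
  ultimately have TW: "T = rcar W" by auto
  have "rcar ?I \<subseteq> S"
  proof
    fix d assume d: "d \<in> rcar ?I"
    obtain x' w' where xw': "x' \<in> PeE M e" "w' \<in> rcar W" "d = cls W x' w'" using ind_elim[OF W d] by blast
    show "d \<in> S"
    proof (cases "x' = z")
      case True then have "d = rzero ?I" using xw' cls_zero[OF W] ind_zero[OF W] by simp
      then show ?thesis using subrep_zero[OF S] by simp
    next
      case False then have xL: "x' \<in> Lset" using xw' PeE_Lset by simp
      have "cls W e w' \<in> S" using TW xw' T_def by auto
      from subrep_cl[OF S Lset_C[OF xL] this] show ?thesis using x_shift[OF W xL xw'(2)] xw'(3) by simp
    qed
  qed
  then show False using ne subrep_sub[OF S] by blast
qed

lemma N_ne: assumes sW: "simple_GJ M e W" shows "Nset M e (ind M e W) \<noteq> rcar (ind M e W)"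
proof -
  have W: "rep_GJ M e W" using sGJ_rep[OF sW] .
  obtain w where w: "w \<in> rcar W" "w \<noteq> rzero W" using sGJ_ex[OF sW] by blast
  show ?thesis using cls_e_notN[OF W w] cls_in[OF W Lset_PeE[OF e_Lset] w(1)] by blast
qed

end

context ctx begin

lemma Q_rep: assumes W: "rep_GJ M e W" shows "rep_M M (Qrep M e W)"
  unfolding Qrep_def using quot_rep[OF ind_rep[OF W] N_subrep[OF ind_rep[OF W]]] .

lemma Q_car: "rcar (Qrep M e W) = (rcar (ind M e W) - Nset M e (ind M e W)) \<union> {rzero (ind M e W)}"
  unfolding Qrep_def by simp
lemma Q_zero: "rzero (Qrep M e W) = rzero (ind M e W)"
  unfolding Qrep_def by simp
lemma Q_act: "ract (Qrep M e W) m c = (if ract (ind M e W) m c \<in> Nset M e (ind M e W) then rzero (ind M e W) else ract (ind M e W) m c)"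
  unfolding Qrep_def by simp

lemma Q_simple: assumes sW: "simple_GJ M e W" shows "simple_M M (Qrep M e W)"
proof -
  let ?I = "ind M e W" and ?N = "Nset M e (ind M e W)" and ?Q = "Qrep M e W"
  have W: "rep_GJ M e W" using sGJ_rep[OF sW] .
  have NS: "subrep_M M ?I ?N" using N_subrep[OF ind_rep[OF W]] .
  obtain w where w: "w \<in> rcar W" "w \<noteq> rzero W" using sGJ_ex[OF sW] by blast
  have c1: "cls W e w \<in> rcar ?Q" "cls W e w \<noteq> rzero ?Q"
    using cls_e_notN[OF W w] cls_in[OF W Lset_PeE[OF e_Lset] w(1)] cls_e_zero[OF W w(1)] w Q_car[of W] Q_zero[of W] by auto
  have ne: "rcar ?Q \<noteq> {rzero ?Q}" using c1 by auto
  have sub: "S = {rzero ?Q} \<or> S = rcar ?Q" if S: "subrep_M M ?Q S" for S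
  proof -
    let ?S = "S \<union> ?N"
    have SQ: "S \<subseteq> rcar ?Q" using subrep_sub[OF S] .
    have Sz: "rzero ?I \<in> S" using subrep_zero[OF S] Q_zero[of W] by simp
    have cl: "ract ?I m c \<in> ?S" if m: "m \<in> C" and c: "c \<in> ?S" for m c
    proof (cases "c \<in> ?N")
      case True then show ?thesis using subrep_cl[OF NS m] by simp
    next
      case False
      then have "c \<in> S" using c by simp
      then have "ract ?Q m c \<in> S" using subrep_cl[OF S m] by simp
      then show ?thesis using Q_act[of W m c] by (auto split: if_splits)
    qed
    have "subrep_M M ?I ?S"
      unfolding subrep_M_def
    proof (intro conjI ballI)
      show "?S \<subseteq> rcar ?I" using SQ subrep_sub[OF NS] Q_car[of W] rM_zero[OF ind_rep[OF W]] by auto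
      show "rzero ?I \<in> ?S" using Sz by simp
      show "ract ?I g v \<in> ?S" if "g \<in> G" "v \<in> ?S" for g v using cl GC that by blast
      show "ract ?I m v \<in> ?S" if "m \<in> C" "v \<in> ?S" for m v using cl that by blast
    qed
    then have "?S = rcar ?I \<or> ?S \<subseteq> ?N" using N_max[OF sW] by blast
    then show ?thesis
    proof
      assume "?S = rcar ?I"
      then have "rcar ?Q \<subseteq> S" using Q_car[of W] Sz by auto
      then show ?thesis using SQ by auto
    next
      assume "?S \<subseteq> ?N"
      then have "S \<subseteq> {rzero ?Q}" using SQ Q_car[of W] Q_zero[of W] by auto
      then show ?thesis using Sz Q_zero[of W] by auto
    qed
  qed
  show ?thesis unfolding simple_M_def using Q_rep[OF W] ne sub by blast
qed

lemma regJ: "regular_Jclass M JJ"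
  unfolding regular_Jclass_def is_Jclass_def JJ_def
  using eC eJ ide unfolding JJ_def by blast

lemma Q_apex: assumes sW: "simple_GJ M e W" shows "has_apex M (Qrep M e W) JJ"
proof -
  let ?I = "ind M e W" and ?N = "Nset M e (ind M e W)" and ?Q = "Qrep M e W"
  have W: "rep_GJ M e W" using sGJ_rep[OF sW] .
  obtain w where w: "w \<in> rcar W" "w \<noteq> rzero W" using sGJ_ex[OF sW] by blast
  have "Ann M ?Q = IJ M JJ"
  proof
    show "IJ M JJ \<subseteq> Ann M ?Q"
    proof
      fix x assume x: "x \<in> IJ M JJ"
      then have xC: "x \<in> C" and xe: "e \<notin> Jideal M x" using IJ_iff by auto
      have "ract ?Q x c = rzero ?Q" if c: "c \<in> rcar ?Q" for c
      proof -
        have cI: "c \<in> rcar ?I" using c Q_car[of W] rM_zero[OF ind_rep[OF W]] by auto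
        obtain y v where yv: "y \<in> PeE M e" "v \<in> rcar W" "c = cls W y v" using ind_elim[OF W cI] by blast
        have "x \<cdot> y \<notin> JJ" using J_right[OF xC PeE_C[OF yv(1)]] xe by blast
        then have "pm x y = z" by (simp add: pmul_eq)
        then have "ract ?I x c = rzero ?I" using act_cls[OF W xC yv(1,2)] yv cls_zero[OF W z_PeE yv(2)] ind_zero[OF W] by simp
        then show ?thesis using Q_act[of W] Q_zero[of W] by simp
      qed
      then show "x \<in> Ann M ?Q" unfolding Ann_def using xC by blast
    qed
    show "Ann M ?Q \<subseteq> IJ M JJ"
    proof
      fix x assume x: "x \<in> Ann M ?Q"
      then have xC: "x \<in> C" unfolding Ann_def by blast
      show "x \<in> IJ M JJ"
      proof (rule ccontr)
        assume "x \<notin> IJ M JJ"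
        then have "e \<in> Jideal M x" using IJ_iff xC by blast
        then obtain u v where uv: "u \<in> C" "v \<in> C" "e = u \<cdot> x \<cdot> v" unfolding Jideal_iff by blast
        define y where "y = v \<cdot> e"
        have yC: "y \<in> C" using uv(1,2) y_def by simp
        have e1: "u \<cdot> x \<cdot> y = e"
        proof -
          have "u \<cdot> x \<cdot> y = (u \<cdot> x \<cdot> v) \<cdot> e" unfolding y_def using assoc[of "u \<cdot> x" v e] uv(1,2) xC by simp
          also have "\<dots> = e" using uv(3)[symmetric] by simp
          finally show ?thesis .
        qed
        have "e \<in> Jideal M y" using Jideal_mul[of "u \<cdot> x" y one] uv(1,2) xC yC e1 by simp
        moreover have "y \<in> Jideal M e" using Jideal_mulL[of v e] uv(1,2) y_def by simp
        ultimately have yJ: "y \<in> JJ" using JJ_iff yC by simp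
        have yL: "y \<in> Lset" unfolding Lset_def y_def using yJ uv(1,2) y_def by (simp add: assoc)
        have e2: "u \<cdot> (x \<cdot> y) = e" using e1 uv(1,2) xC yC by (simp add: assoc)
        have "e \<in> Jideal M (x \<cdot> y)" using Jideal_mulL[of u "x \<cdot> y"] uv(1,2) xC yC e2 by simp
        then have xyJ: "x \<cdot> y \<in> JJ" using J_mulL[OF xC yJ] by simp
        have xyL: "x \<cdot> y \<in> Lset" using Lset_mul[OF xC yL xyJ] .
        have euC: "e \<cdot> u \<in> C" using uv(1,2) by simp
        have eux: "e \<cdot> u \<cdot> (x \<cdot> y) = e" using e2 uv(1,2) xC yC by (simp add: assoc)
        have ee': "pm (e \<cdot> u) (x \<cdot> y) = e" using eux by (simp add: pmul_eq)
        define c where "c = cls W y w"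
        have cI: "c \<in> rcar ?I" unfolding c_def using cls_in[OF W Lset_PeE[OF yL] w(1)] .
        have xc: "ract ?I x c = cls W (x \<cdot> y) w" unfolding c_def using act_cls[OF W xC Lset_PeE[OF yL] w(1)] xyJ by (simp add: pmul_eq)
        have exc: "ract ?I (e \<cdot> u) (ract ?I x c) = cls W e w"
          using xc act_cls[OF W euC Lset_PeE[OF xyL] w(1)] ee' by simp
        have xcN: "ract ?I x c \<notin> ?N"
        proof
          assume "ract ?I x c \<in> ?N"
          then have "ract ?I (e \<cdot> u) (ract ?I x c) = rzero ?I" unfolding Nset_def using uv(1,2) by blast
          then show False using exc cls_e_zero[OF W w(1)] w by simp
        qed
        have cN: "c \<notin> ?N"
        proof
          assume "c \<in> ?N"
          then have "ract ?I x c \<in> ?N" using subrep_cl[OF N_subrep[OF ind_rep[OF W]] xC] by simp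
          then show False using xcN by simp
        qed
        have cQ: "c \<in> rcar ?Q" using cI cN Q_car[of W] by auto
        have "ract ?Q x c = rzero ?Q" using x cQ unfolding Ann_def by blast
        then have "ract ?I x c = rzero ?I" using Q_act[of W] Q_zero[of W] xcN by (simp split: if_splits)
        then show False using xc cls_zero[OF W Lset_PeE[OF xyL] w(1)] Lset_nz[OF xyL] w ind_zero[OF W] by simp
      qed
    qed
  qed
  then show ?thesis unfolding has_apex_def using regJ unfolding JJ_def by simp
qed

end

context ctx begin

lemma res_simps[simp]: "rcar (res M e V) = ract V e ` rcar V" "rzero (res M e V) = rzero V"
  "ract (res M e V) = ract V" unfolding res_def by simp_all

lemma morph_GJ_D1: assumes "morph_GJ M e V W f" shows "\<forall>v\<in>rcar V. f v \<in> rcar W"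
  using assms vmor1 unfolding morph_GJ_def by fastforce
lemma morph_GJ_D2: assumes "morph_GJ M e V W f" shows "f (rzero V) = rzero W"
  using assms vmor2 unfolding morph_GJ_def by fastforce
lemma morph_GJ_D3: assumes "morph_GJ M e V W f" shows "\<forall>a\<in>hatGJ M e. \<forall>v\<in>rcar V. f (ract V a v) = ract W a (f v)"
  using assms unfolding morph_GJ_def by blast
lemmas morph_GJ_D = morph_GJ_D1 morph_GJ_D2 morph_GJ_D3

lemma iso_GJ_refl: assumes W: "rep_GJ M e W" shows "iso_GJ M e W W"
proof -
  have "vect_morph M (scal M e W) (scal M e W) id" by (rule vect_morph_inj) auto
  then have "morph_GJ M e W W id" unfolding morph_GJ_def by simp
  then show ?thesis unfolding iso_GJ_def by (intro exI[of _ id] conjI) auto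
qed

lemma morph_GJ_comp: assumes h1: "morph_GJ M e X Y h1" and h2: "morph_GJ M e Y Z h2"
  and k1: "\<forall>v\<in>rcar X. k1 (h1 v) = v" and k2: "\<forall>v\<in>rcar Y. k2 (h2 v) = v"
shows "morph_GJ M e X Z (h2 \<circ> h1)"
proof -
  note a = morph_GJ_D[OF h1] and b = morph_GJ_D[OF h2]
  have "vect_morph M (scal M e X) (scal M e Z) (h2 \<circ> h1)"
  proof (rule vect_morph_inj)
    show "\<forall>v\<in>rcar (scal M e X). (h2 \<circ> h1) v \<in> rcar (scal M e Z)" using a(1) b(1) by simp
    show "(h2 \<circ> h1) (rzero (scal M e X)) = rzero (scal M e Z)" using a(2) b(2) by simp
    show "\<forall>g\<in>G. \<forall>v\<in>rcar (scal M e X). (h2 \<circ> h1) (ract (scal M e X) g v) = ract (scal M e Z) g ((h2 \<circ> h1) v)"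
      using a(1,3) b(3) GJ_hat GeGJ by simp
    show "inj_on (h2 \<circ> h1) (rcar (scal M e X))" unfolding inj_on_def using a(1) k1 k2 by (metis comp_apply scal_simps(1))
  qed
  moreover have "\<forall>a\<in>hatGJ M e. \<forall>v\<in>rcar X. (h2 \<circ> h1) (ract X a v) = ract Z a ((h2 \<circ> h1) v)"
    using a(1,3) b(3) by simp
  ultimately show ?thesis unfolding morph_GJ_def by blast
qed

lemma iso_GJ_trans: assumes A: "iso_GJ M e U V" and B: "iso_GJ M e V W" shows "iso_GJ M e U W"
proof -
  obtain f1 g1 where 1: "morph_GJ M e U V f1" "morph_GJ M e V U g1" "\<forall>v\<in>rcar U. g1 (f1 v) = v" "\<forall>w\<in>rcar V. f1 (g1 w) = w"
    using A unfolding iso_GJ_def by blast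
  obtain f2 g2 where 2: "morph_GJ M e V W f2" "morph_GJ M e W V g2" "\<forall>v\<in>rcar V. g2 (f2 v) = v" "\<forall>w\<in>rcar W. f2 (g2 w) = w"
    using B unfolding iso_GJ_def by blast
  have "morph_GJ M e U W (f2 \<circ> f1)" using morph_GJ_comp[OF 1(1) 2(1) 1(3) 2(3)] .
  moreover have "morph_GJ M e W U (g1 \<circ> g2)" using morph_GJ_comp[OF 2(2) 1(2) 2(4) 1(4)] .
  moreover have "\<forall>v\<in>rcar U. (g1 \<circ> g2) ((f2 \<circ> f1) v) = v" using 1(3) 2(3) morph_GJ_D(1)[OF 1(1)] by simp
  moreover have "\<forall>w\<in>rcar W. (f2 \<circ> f1) ((g1 \<circ> g2) w) = w" using 1(4) 2(4) morph_GJ_D(1)[OF 2(2)] by simp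
  ultimately show ?thesis unfolding iso_GJ_def by blast
qed

lemma morph_res: assumes X: "rep_M M X" and h: "morph_M M X Y h"
  and k: "\<forall>v\<in>rcar X. k (h v) = v"
shows "morph_GJ M e (res M e X) (res M e Y) h"
proof -
  have hv: "vect_morph M X Y h" and hm: "\<forall>m\<in>C. \<forall>v\<in>rcar X. h (ract X m v) = ract Y m (h v)"
    using h unfolding morph_M_def by blast+
  have hX: "\<forall>v\<in>rcar X. h v \<in> rcar Y" using vmor1[OF hv] .
  have "vect_morph M (scal M e (res M e X)) (scal M e (res M e Y)) h"
  proof (rule vect_morph_inj)
    show "\<forall>v\<in>rcar (scal M e (res M e X)). h v \<in> rcar (scal M e (res M e Y))"
      using hm hX rM_cl[OF X eC] by auto
    show "h (rzero (scal M e (res M e X))) = rzero (scal M e (res M e Y))" using vmor2[OF hv] by simp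
    show "\<forall>g\<in>G. \<forall>v\<in>rcar (scal M e (res M e X)). h (ract (scal M e (res M e X)) g v) = ract (scal M e (res M e Y)) g (h v)"
      using hm rM_cl[OF X eC] GC by auto
    show "inj_on h (rcar (scal M e (res M e X)))" unfolding inj_on_def using k rM_cl[OF X eC] by auto (metis)
  qed
  moreover have "\<forall>a\<in>hatGJ M e. \<forall>v\<in>rcar (res M e X). h (ract (res M e X) a v) = ract (res M e Y) a (h v)"
    using hm rM_cl[OF X eC] hatGJ_iff GJ_C by auto
  ultimately show ?thesis unfolding morph_GJ_def by blast
qed

lemma iso_M_res: assumes A: "rep_M M V" and B: "rep_M M W" and iso: "iso_M M V W"
  shows "iso_GJ M e (res M e V) (res M e W)"
proof -
  obtain f g where fg: "morph_M M V W f" "morph_M M W V g" "\<forall>v\<in>rcar V. g (f v) = v" "\<forall>w\<in>rcar W. f (g w) = w"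
    using iso unfolding iso_M_def by blast
  have "morph_GJ M e (res M e V) (res M e W) f" using morph_res[OF A fg(1) fg(3)] .
  moreover have "morph_GJ M e (res M e W) (res M e V) g" using morph_res[OF B fg(2) fg(4)] .
  moreover have "\<forall>v\<in>rcar (res M e V). g (f v) = v" using fg(3) rM_cl[OF A eC] by auto
  moreover have "\<forall>w\<in>rcar (res M e W). f (g w) = w" using fg(4) rM_cl[OF B eC] by auto
  ultimately show ?thesis unfolding iso_GJ_def by blast
qed

lemma Q_res_iso: assumes sW: "simple_GJ M e W" shows "iso_GJ M e (res M e (Qrep M e W)) W"
proof -
  let ?I = "ind M e W" and ?N = "Nset M e (ind M e W)" and ?Q = "Qrep M e W"
  have W: "rep_GJ M e W" using sGJ_rep[OF sW] .
  have Ipos: "rep_M M ?I" using ind_rep[OF W] .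
  have ePeE: "e \<in> PeE M e" using Lset_PeE[OF e_Lset] .
  have zI: "rzero ?I \<in> ?N" using subrep_zero[OF N_subrep[OF Ipos]] .
  have c0: "cls W e w = rzero ?I" if "w \<in> rcar W" "cls W e w \<in> ?N" for w
    using that cls_e_notN[OF W] cls_e_zero[OF W] by blast
  have clsQ: "cls W e w \<in> rcar ?Q" if w: "w \<in> rcar W" for w
    using cls_in[OF W ePeE w] c0[OF w] Q_car[of W] by auto
  have Qa: "ract ?Q a (cls W e w) = cls W e (ract W a w)" if a: "a \<in> GJ M e" and w: "w \<in> rcar W" for a w
    using e_shift[OF W a w] c0[OF rW_clG[OF W a w]] Q_act[of W a] by simp
  have Qe: "ract ?Q e (cls W e w) = cls W e w" if w: "w \<in> rcar W" for w
    using Qa[OF eGJ w] rW_e[OF W w] by simp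
  have Qz: "ract ?Q z (cls W e w) = cls W e (ract W z w)" if w: "w \<in> rcar W" for w
    using act_zm[OF W cls_in[OF W ePeE w]] zI Q_act[of W z] rW_zm[OF W w] cls_e_zero[OF W rW_zero[OF W]] by simp
  have inj: "inj_on (cls W e) (rcar W)"
  proof (rule inj_onI)
    fix w w' assume w: "w \<in> rcar W" "w' \<in> rcar W" "cls W e w = cls W e w'"
    then have r: "((e, w), (e, w')) \<in> Rel W" using cls_eq[OF W ePeE ePeE] by simp
    show "w = w'"
    proof (cases "w = rzero W \<or> w' = rzero W")
      case True then show ?thesis using w cls_e_zero[OF W] by metis
    next
      case False
      then obtain a where a: "a \<in> GJ M e" "e = e \<cdot> a" "w = ract W a w'" using r enz unfolding Rel_def by auto
      then have "a = e" using GJ_le by simp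
      then show ?thesis using a rW_e[OF W w(2)] by simp
    qed
  qed
  have img: "rcar (res M e ?Q) = cls W e ` rcar W"
  proof
    show "cls W e ` rcar W \<subseteq> rcar (res M e ?Q)" using clsQ Qe by (auto intro!: image_eqI[of _ _ "cls W e w" for w])
  next
    show "rcar (res M e ?Q) \<subseteq> cls W e ` rcar W"
    proof
      fix r assume "r \<in> rcar (res M e ?Q)"
      then obtain c where c: "c \<in> rcar ?Q" "r = ract ?Q e c" by auto
      have cI: "c \<in> rcar ?I" using c(1) Q_car[of W] rM_zero[OF Ipos] by auto
      obtain x v where xv: "x \<in> PeE M e" "v \<in> rcar W" "c = cls W x v" using ind_elim[OF W cI] by blast
      have z0: "rzero ?I = cls W e (rzero W)" using cls_e_zero[OF W rW_zero[OF W]] by simp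
      show "r \<in> cls W e ` rcar W"
      proof (cases "ract ?I e c \<in> ?N \<or> pm e x = z")
        case True
        then have "r = rzero ?I" using c Q_act[of W e c] act_cls[OF W eC xv(1,2)] xv cls_zero[OF W z_PeE xv(2)] ind_zero[OF W]
          by auto
        then show ?thesis using z0 rW_zero[OF W] by auto
      next
        case False
        then have r1: "r = cls W (pm e x) v" using c Q_act[of W e c] act_cls[OF W eC xv(1,2)] xv by simp
        have yL: "pm e x \<in> Lset" using False pm_PeE[OF eC xv(1)] PeE_Lset by blast
        have "pm e x = e \<cdot> x" using False by (simp add: pmul_eq split: if_splits)
        then have "e \<cdot> pm e x = pm e x" using xv PeE_C by (simp add: assoc)
        then have yG: "pm e x \<in> GJ M e" using yL GJ_iff Lset_def by simp
        have "r = cls W e (ract W (pm e x) v)"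
          using r1 x_shift[OF W yL xv(2)] e_shift[OF W yG xv(2)] by simp
        then show ?thesis using rW_clG[OF W yG xv(2)] by blast
      qed
    qed
  qed
  have mor: "morph_GJ M e W (res M e ?Q) (cls W e)"
  proof -
    have "vect_morph M (scal M e W) (scal M e (res M e ?Q)) (cls W e)"
    proof (rule vect_morph_inj)
      show "\<forall>v\<in>rcar (scal M e W). cls W e v \<in> rcar (scal M e (res M e ?Q))" using img by auto
      show "cls W e (rzero (scal M e W)) = rzero (scal M e (res M e ?Q))"
        using cls_e_zero[OF W rW_zero[OF W]] Q_zero[of W] by simp
      show "\<forall>g\<in>G. \<forall>v\<in>rcar (scal M e W). cls W e (ract (scal M e W) g v) = ract (scal M e (res M e ?Q)) g (cls W e v)"
        using Qa GeGJ by simp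
      show "inj_on (cls W e) (rcar (scal M e W))" using inj by simp
    qed
    moreover have "\<forall>a\<in>hatGJ M e. \<forall>v\<in>rcar W. cls W e (ract W a v) = ract (res M e ?Q) a (cls W e v)"
      using Qa Qz hatGJ_iff by auto
    ultimately show ?thesis unfolding morph_GJ_def by blast
  qed
  have "bij_betw (cls W e) (rcar W) (rcar (res M e ?Q))" using inj img unfolding bij_betw_def by simp
  then show ?thesis using iso_GJ_sym iso_GJ_bij[OF W mor] by blast
qed

end

context ctx begin

lemma sM_rep: "simple_M M V \<Longrightarrow> rep_M M V" unfolding simple_M_def by blast
lemma sM_sub: "simple_M M V \<Longrightarrow> subrep_M M V S \<Longrightarrow> S = {rzero V} \<or> S = rcar V" unfolding simple_M_def by blast
lemma sM_ne: "simple_M M V \<Longrightarrow> rcar V \<noteq> {rzero V}" unfolding simple_M_def by blast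

lemma ann_zero: assumes "Ann M V = IJ M JJ" "x \<in> C" "e \<notin> Jideal M x" "v \<in> rcar V"
  shows "ract V x v = rzero V"
proof -
  have "x \<in> Ann M V" using assms IJ_iff by simp
  then show ?thesis using assms(4) unfolding Ann_def by blast
qed

lemma notJ: assumes "b \<in> C" "b \<in> Jideal M e" "b \<notin> JJ" shows "e \<notin> Jideal M b"
  using assms JJ_iff by blast

lemma eV_nz: assumes "Ann M V = IJ M JJ" obtains v where "v \<in> rcar V" "ract V e v \<noteq> rzero V"
proof -
  have "e \<notin> IJ M JJ" using IJ_iff Jideal_self[OF eC] by simp
  then have "e \<notin> Ann M V" using assms by simp
  then show ?thesis using that unfolding Ann_def by auto
qed

lemma cyclic: assumes sV: "simple_M M V" and v: "v \<in> rcar V" "v \<noteq> rzero V" and u: "u \<in> rcar V"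
  shows "\<exists>m\<in>C. u = ract V m v"
proof -
  have V: "rep_M M V" using sM_rep[OF sV] .
  define S where "S = (\<lambda>m. ract V m v) ` C"
  have cl: "ract V n s \<in> S" if n: "n \<in> C" and s: "s \<in> S" for n s
  proof -
    obtain m where m: "m \<in> C" "s = ract V m v" using s S_def by blast
    have "ract V n s = ract V (n \<cdot> m) v" using rM_comp[OF V n m(1) v(1)] m by simp
    then show ?thesis unfolding S_def using n m by auto
  qed
  have "subrep_M M V S"
    unfolding subrep_M_def
  proof (intro conjI ballI)
    show "S \<subseteq> rcar V" unfolding S_def using rM_cl[OF V _ v(1)] by auto
    show "rzero V \<in> S" unfolding S_def using rM_zm[OF V v(1)] z_C by (auto intro: image_eqI[of _ _ z])
    show "ract V g s \<in> S" if "g \<in> G" "s \<in> S" for g s using cl GC that by blast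
    show "ract V m s \<in> S" if "m \<in> C" "s \<in> S" for m s using cl that by blast
  qed
  moreover have "v \<in> S" unfolding S_def using rM_one[OF V v(1)] one_C by (auto intro: image_eqI[of _ _ one])
  ultimately have "S = rcar V" using sM_sub[OF sV] v by blast
  then show ?thesis using u S_def by auto
qed

lemma hat_props: "a \<in> hatGJ M e \<Longrightarrow> a \<in> C \<and> e \<cdot> a = a \<and> a \<cdot> e = a"
  using hatGJ_iff GJ_C GJ_le GJ_re by auto

lemma part2a: assumes sV: "simple_M M V" and ann: "Ann M V = IJ M JJ"
  shows "simple_GJ M e (res M e V)"
proof -
  let ?W = "res M e V"
  have V: "rep_M M V" using sM_rep[OF sV] .
  have eVV: "ract V e v \<in> rcar V" if "v \<in> rcar V" for v using rM_cl[OF V eC that] .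
  have ee_act: "ract V e w = w" if w: "w \<in> rcar ?W" for w
  proof -
    obtain v where v: "v \<in> rcar V" "w = ract V e v" using w by auto
    then show ?thesis using rM_comp[OF V eC eC v(1)] by simp
  qed
  have WV: "rcar ?W \<subseteq> rcar V" using eVV by auto
  have acl: "ract V a w \<in> rcar ?W" if a: "a \<in> C" "e \<cdot> a = a" and w: "w \<in> rcar ?W" for a w
  proof -
    have wV: "w \<in> rcar V" using w WV by auto
    have "ract V a w = ract V e (ract V a w)" using rM_comp[OF V eC a(1) wV] a(2) by simp
    then show ?thesis unfolding res_simps by (rule image_eqI[OF _ rM_cl[OF V a(1) wV]])
  qed
  have hcl: "ract V a w \<in> rcar ?W" if a: "a \<in> hatGJ M e" and w: "w \<in> rcar ?W" for a w
  proof -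
    have "a \<in> C" "e \<cdot> a = a" using hat_props[OF a] by auto
    then show ?thesis using acl[OF _ _ w] by blast
  qed
  have gecl: "ract V (g \<cdot> e) w \<in> rcar ?W" if g: "g \<in> G" and w: "w \<in> rcar ?W" for g w
    using hcl[OF GJ_hat[OF GeGJ[OF g]] w] .
  have gact: "ract V (g \<cdot> e) w = ract V g w" if g: "g \<in> G" and w: "w \<in> rcar ?W" for g w
  proof -
    have wV: "w \<in> rcar V" using w WV by blast
    have "ract V (g \<cdot> e) w = ract V g (ract V e w)" using rM_comp[OF V GC[OF g] eC wV] .
    then show ?thesis using ee_act[OF w] by simp
  qed
  have orbW: "orbit M (scal M e ?W) w = orbit M V w" if w: "w \<in> rcar ?W" for w
    unfolding orbit_def scal_simps res_simps by (rule image_cong[OF refl gact[OF _ w]])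
  have vo: "vect_obj M (scal M e ?W)"
  proof -
    have "finite (rcar (scal M e ?W))" using rM_fin[OF V] by simp
    moreover have "rzero (scal M e ?W) \<in> rcar (scal M e ?W)"
      using image_eqI[where f="ract V e", OF rM_z[OF V eC, symmetric] rM_zero[OF V]] by simp
    moreover have "\<forall>g\<in>G. \<forall>v\<in>rcar (scal M e ?W). ract (scal M e ?W) g v \<in> rcar (scal M e ?W)"
    proof (intro ballI)
      fix g v assume g: "g \<in> G" and v: "v \<in> rcar (scal M e ?W)"
      have "v \<in> rcar ?W" using v by (simp only: scal_simps)
      from gecl[OF g this] show "ract (scal M e ?W) g v \<in> rcar (scal M e ?W)" by (simp only: scal_simps res_simps)
    qed
    moreover have "\<forall>v\<in>rcar (scal M e ?W). ract (scal M e ?W) one v = v"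
    proof (intro ballI)
      fix v assume v: "v \<in> rcar (scal M e ?W)"
      have "v \<in> rcar ?W" using v by (simp only: scal_simps)
      from ee_act[OF this] show "ract (scal M e ?W) one v = v" using lone[OF eC] by (simp only: scal_simps res_simps)
    qed
    moreover have "\<forall>g\<in>G. \<forall>h\<in>G. \<forall>v\<in>rcar (scal M e ?W). ract (scal M e ?W) (g \<cdot> h) v = ract (scal M e ?W) g (ract (scal M e ?W) h v)"
    proof (intro ballI)
      fix g h v assume g: "g \<in> G" and h: "h \<in> G" and v: "v \<in> rcar (scal M e ?W)"
      have vW: "v \<in> rcar ?W" using v by simp
      have "ract V (g \<cdot> h \<cdot> e) v = ract V (g \<cdot> h) v" using gact[OF Gcl[OF g h] vW] .
      also have "\<dots> = ract V g (ract V h v)" using rM_comp[OF V GC[OF g] GC[OF h]] vW WV by auto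
      also have "\<dots> = ract V (g \<cdot> e) (ract V (h \<cdot> e) v)" using gact[OF h vW] gact[OF g gecl[OF h vW]] by simp
      finally show "ract (scal M e ?W) (g \<cdot> h) v = ract (scal M e ?W) g (ract (scal M e ?W) h v)" by simp
    qed
    moreover have "\<forall>g\<in>G. ract (scal M e ?W) g (rzero (scal M e ?W)) = rzero (scal M e ?W)"
      using rM_z[OF V] GC by simp
    moreover have "\<forall>g\<in>G. \<forall>v\<in>rcar (scal M e ?W). v \<noteq> rzero (scal M e ?W) \<and> ract (scal M e ?W) g v = v \<longrightarrow> g = one"
    proof (intro ballI impI)
      fix g v assume g: "g \<in> G" and v: "v \<in> rcar (scal M e ?W)" and h: "v \<noteq> rzero (scal M e ?W) \<and> ract (scal M e ?W) g v = v"
      have vW: "v \<in> rcar ?W" using v by simp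
      have vV: "v \<in> rcar V" using vW WV by blast
      have "v \<noteq> rzero V" "ract V (g \<cdot> e) v = v" using h by simp_all
      then show "g = one" using rM_free[OF V g vV] gact[OF g vW] by simp
    qed
    ultimately show ?thesis unfolding vect_obj_def by blast
  qed
  have vm: "vect_morph M (scal M e ?W) (scal M e ?W) (ract ?W a)" if a: "a \<in> hatGJ M e" for a
  proof -
    have ap: "a \<in> C" "e \<cdot> a = a" "a \<cdot> e = a" using hat_props[OF a] by auto
    have "\<forall>v\<in>rcar (scal M e ?W). ract ?W a v \<in> rcar (scal M e ?W)"
    proof (intro ballI)
      fix v assume v: "v \<in> rcar (scal M e ?W)"
      have "v \<in> rcar ?W" using v by (simp only: scal_simps)
      from hcl[OF a this] show "ract ?W a v \<in> rcar (scal M e ?W)" by (simp only: scal_simps res_simps)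
    qed
    moreover have "ract ?W a (rzero (scal M e ?W)) = rzero (scal M e ?W)" using rM_z[OF V ap(1)] by simp
    moreover have "\<forall>g\<in>G. \<forall>v\<in>rcar (scal M e ?W). ract ?W a (ract (scal M e ?W) g v) = ract (scal M e ?W) g (ract ?W a v)"
    proof (intro ballI)
      fix g v assume g: "g \<in> G" and v: "v \<in> rcar (scal M e ?W)"
      have vV: "v \<in> rcar V" using v WV by (simp only: scal_simps) blast
      have gC: "g \<in> C" using GC g by simp
      have "a \<cdot> (g \<cdot> e) = g \<cdot> e \<cdot> a"
      proof -
        have "a \<cdot> (g \<cdot> e) = a \<cdot> g \<cdot> e" using assoc[of a g e] ap gC by simp
        also have "\<dots> = g \<cdot> a \<cdot> e" using Gcomm[OF g ap(1)] by simp
        also have "\<dots> = g \<cdot> a" using assoc[of g a e] ap gC by simp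
        also have "\<dots> = g \<cdot> (e \<cdot> a)" using ap by simp
        also have "\<dots> = g \<cdot> e \<cdot> a" using assoc[of g e a] ap gC by simp
        finally show ?thesis .
      qed
      then have "ract V a (ract V (g \<cdot> e) v) = ract V (g \<cdot> e) (ract V a v)"
        using rM_comp[OF V ap(1) cl[OF gC eC] vV] rM_comp[OF V cl[OF gC eC] ap(1) vV] by metis
      then show "ract ?W a (ract (scal M e ?W) g v) = ract (scal M e ?W) g (ract ?W a v)"
        by (simp only: scal_simps res_simps)
    qed
    moreover have "\<forall>v1\<in>rcar (scal M e ?W). \<forall>v2\<in>rcar (scal M e ?W). ract ?W a v1 = ract ?W a v2 \<and> ract ?W a v1 \<noteq> rzero (scal M e ?W)
       \<longrightarrow> orbit M (scal M e ?W) v1 = orbit M (scal M e ?W) v2"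
    proof (intro ballI impI)
      fix v1 v2 assume v1: "v1 \<in> rcar (scal M e ?W)" and v2: "v2 \<in> rcar (scal M e ?W)"
        and h: "ract ?W a v1 = ract ?W a v2 \<and> ract ?W a v1 \<noteq> rzero (scal M e ?W)"
      have vV: "v1 \<in> rcar V" "v2 \<in> rcar V" using v1 v2 WV by (simp_all only: scal_simps) blast+
      have "ract V a v1 = ract V a v2" using conjunct1[OF h] unfolding res_simps .
      moreover have "ract V a v1 \<noteq> rzero V" using conjunct2[OF h] unfolding res_simps scal_simps .
      ultimately have "orbit M V v1 = orbit M V v2" using rM_orbit[OF V ap(1) vV] by blast
      moreover have "v1 \<in> rcar ?W" "v2 \<in> rcar ?W" using v1 v2 by (simp_all only: scal_simps)
      ultimately show "orbit M (scal M e ?W) v1 = orbit M (scal M e ?W) v2" using orbW by metis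
    qed
    ultimately show ?thesis unfolding vect_morph_def by blast
  qed
  have rep: "rep_GJ M e ?W"
    unfolding rep_GJ_def
  proof (intro conjI ballI)
    show "vect_obj M (scal M e ?W)" by (rule vo)
    show "vect_morph M (scal M e ?W) (scal M e ?W) (ract ?W a)" if "a \<in> hatGJ M e" for a using vm that by blast
    show "ract ?W (a \<cdot> b) w = ract ?W a (ract ?W b w)" if a: "a \<in> hatGJ M e" and b: "b \<in> hatGJ M e" and w: "w \<in> rcar ?W" for a b w
    proof -
      have "a \<in> C" "b \<in> C" using hat_props[OF a] hat_props[OF b] by auto
      moreover have "w \<in> rcar V" using w WV by auto
      ultimately show ?thesis using rM_comp[OF V] by simp
    qed
    show "ract ?W e w = w" if w: "w \<in> rcar ?W" for w using ee_act[OF w] by (simp only: res_simps)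
    show "ract ?W z w = rzero ?W" if w: "w \<in> rcar ?W" for w
    proof -
      have "w \<in> rcar V" using w WV by blast
      from rM_zm[OF V this] show ?thesis by (simp only: res_simps)
    qed
  qed
  obtain v0 where v0: "v0 \<in> rcar V" "ract V e v0 \<noteq> rzero V" using eV_nz[OF ann] by blast
  have ne: "rcar ?W \<noteq> {rzero ?W}" using v0 by auto
  have sub: "S = {rzero ?W} \<or> S = rcar ?W" if S: "subrep_GJ M e ?W S" for S
  proof (cases "S \<subseteq> {rzero ?W}")
    case True
    have "rzero ?W \<in> S" using S unfolding subrep_GJ_def by blast
    then show ?thesis using True by blast
  next
    case False
    then obtain w where w: "w \<in> S" "w \<noteq> rzero V" by auto
    have "S \<subseteq> rcar ?W" using S unfolding subrep_GJ_def by blast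
    then have wW: "w \<in> rcar ?W" using w by blast
    have wV: "w \<in> rcar V" using wW WV by auto
    have "rcar ?W \<subseteq> S"
    proof
      fix u assume u: "u \<in> rcar ?W"
      then obtain u' where u': "u' \<in> rcar V" "u = ract V e u'" unfolding res_simps by blast
      obtain m where m: "m \<in> C" "u' = ract V m w" using cyclic[OF sV wV w(2) u'(1)] by blast
      define b where "b = e \<cdot> m \<cdot> e"
      have bC: "b \<in> C" using m b_def by simp
      have "u = ract V b w"
      proof -
        have "u = ract V (e \<cdot> m) w" using u' m rM_comp[OF V eC m(1) wV] by simp
        also have "\<dots> = ract V (e \<cdot> m) (ract V e w)" using ee_act[OF wW] by simp
        also have "\<dots> = ract V b w" using rM_comp[OF V cl[OF eC m(1)] eC wV] b_def by simp
        finally show ?thesis .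
      qed
      moreover have "ract V b w \<in> S"
      proof (cases "b \<in> JJ")
        case True
        have "e \<cdot> b = b" "b \<cdot> e = b" unfolding b_def using m by (simp_all add: assoc)
        then have "b \<in> hatGJ M e" using True GJ_iff hatGJ_iff by simp
        moreover have "\<forall>a\<in>hatGJ M e. \<forall>w\<in>S. ract ?W a w \<in> S" using S unfolding subrep_GJ_def by blast
        ultimately show ?thesis using w(1) unfolding res_simps by blast
      next
        case False
        have "b \<in> Jideal M e" unfolding b_def using Jideal_mul[of "e \<cdot> m" e one] m by (simp add: assoc)
        then have "e \<notin> Jideal M b" using notJ bC False by blast
        then have "ract V b w = rzero V" using ann_zero[OF ann bC _ wV] by simp
        moreover have "rzero ?W \<in> S" using S unfolding subrep_GJ_def by blast
        ultimately show ?thesis unfolding res_simps by simp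
      qed
      ultimately show "u \<in> S" by simp
    qed
    moreover have "S \<subseteq> rcar ?W" using S unfolding subrep_GJ_def by blast
    ultimately show ?thesis by blast
  qed
  show ?thesis unfolding simple_GJ_def using rep ne sub by blast
qed

end

context ctx begin

lemma partA: assumes sV: "simple_M M V" and ann: "Ann M V = IJ M JJ" and W: "rep_GJ M e W"
  and iso: "iso_GJ M e W (res M e V)"
  shows "iso_M M (Qrep M e W) V"
proof -
  let ?I = "ind M e W" and ?N = "Nset M e (ind M e W)" and ?Q = "Qrep M e W"
  have V: "rep_M M V" using sM_rep[OF sV] .
  have Irep: "rep_M M ?I" using ind_rep[OF W] .
  obtain \<phi> \<psi> where ph: "morph_GJ M e W (res M e V) \<phi>" "morph_GJ M e (res M e V) W \<psi>"
    "\<forall>w\<in>rcar W. \<psi> (\<phi> w) = w" "\<forall>u\<in>rcar (res M e V). \<phi> (\<psi> u) = u"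
    using iso unfolding iso_GJ_def by blast
  have \<phi>img: "\<phi> w \<in> ract V e ` rcar V" if w: "w \<in> rcar W" for w
  proof -
    have "\<phi> w \<in> rcar (res M e V)" using morph_GJ_D1[OF ph(1)] w by blast
    then show ?thesis by (simp only: res_simps)
  qed
  have \<phi>V: "\<phi> w \<in> rcar V" if w: "w \<in> rcar W" for w
  proof -
    obtain v where v: "v \<in> rcar V" "\<phi> w = ract V e v" using \<phi>img[OF w] by blast
    then show ?thesis using rM_cl[OF V eC v(1)] by simp
  qed
  have \<phi>e: "ract V e (\<phi> w) = \<phi> w" if w: "w \<in> rcar W" for w
  proof -
    obtain v where v: "v \<in> rcar V" "\<phi> w = ract V e v" using \<phi>img[OF w] by blast
    then show ?thesis using rM_comp[OF V eC eC v(1)] by simp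
  qed
  have \<phi>0: "\<phi> (rzero W) = rzero V" using morph_GJ_D2[OF ph(1)] unfolding res_simps .
  have \<phi>a: "\<phi> (ract W a w) = ract V a (\<phi> w)" if a: "a \<in> hatGJ M e" and w: "w \<in> rcar W" for a w
  proof -
    have "\<phi> (ract W a w) = ract (res M e V) a (\<phi> w)" using morph_GJ_D3[OF ph(1)] a w by blast
    then show ?thesis by (simp only: res_simps)
  qed
  have \<phi>inj: "w = w'" if w: "w \<in> rcar W" "w' \<in> rcar W" "\<phi> w = \<phi> w'" for w w'
  proof -
    have "w = \<psi> (\<phi> w)" using ph(3) w(1) by simp
    also have "\<dots> = \<psi> (\<phi> w')" using w(3) by simp
    also have "\<dots> = w'" using ph(3) w(2) by simp
    finally show ?thesis .
  qed
  have \<phi>nz: "\<phi> w \<noteq> rzero V" if w: "w \<in> rcar W" "w \<noteq> rzero W" for w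
  proof
    assume "\<phi> w = rzero V"
    then have "\<phi> w = \<phi> (rzero W)" using \<phi>0 by simp
    then show False using \<phi>inj[OF w(1) rW_zero[OF W]] w(2) by simp
  qed
  define \<Phi> where "\<Phi> x w = ract V x (\<phi> w)" for x w
  have \<Phi>V: "\<Phi> x w \<in> rcar V" if "x \<in> PeE M e" "w \<in> rcar W" for x w
    unfolding \<Phi>_def using rM_cl[OF V PeE_C[OF that(1)] \<phi>V[OF that(2)]] .
  have \<Phi>resp: "\<Phi> x w = \<Phi> y v" if r: "((x, w), (y, v)) \<in> Rel W" for x w y v
  proof -
    have mem: "x \<in> PeE M e" "y \<in> PeE M e" "w \<in> rcar W" "v \<in> rcar W" using Rel_dom[OF r] by auto
    have zero: "\<Phi> x' w' = rzero V" if "x' \<in> PeE M e" "w' \<in> rcar W" "x' = z \<or> w' = rzero W" for x' w'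
    proof (cases "x' = z")
      case True then show ?thesis unfolding \<Phi>_def using rM_zm[OF V \<phi>V[OF that(2)]] by simp
    next
      case False then have "w' = rzero W" using that by simp
      then show ?thesis unfolding \<Phi>_def using \<phi>0 rM_z[OF V PeE_C[OF that(1)]] by simp
    qed
    show ?thesis
    proof (cases "(x = z \<or> w = rzero W) \<and> (y = z \<or> v = rzero W)")
      case True then show ?thesis using zero mem by simp
    next
      case False
      then obtain a where a: "a \<in> GJ M e" "y = x \<cdot> a" "w = ract W a v" using r unfolding Rel_def by auto
      have "\<Phi> y v = ract V x (ract V a (\<phi> v))" unfolding \<Phi>_def a(2)
        using rM_comp[OF V PeE_C[OF mem(1)] GJ_C[OF a(1)] \<phi>V[OF mem(4)]] by simp
      also have "\<dots> = \<Phi> x w" unfolding \<Phi>_def a(3) using \<phi>a[OF GJ_hat[OF a(1)] mem(4)] by simp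
      finally show ?thesis by simp
    qed
  qed
  define \<Psi> where "\<Psi> c = (let p = (SOME p. p \<in> c) in \<Phi> (fst p) (snd p))" for c
  have \<Psi>cls: "\<Psi> (cls W x w) = \<Phi> x w" if x: "x \<in> PeE M e" and w: "w \<in> rcar W" for x w
  proof -
    have "(x, w) \<in> cls W x w" unfolding cls_def using Rel_refl[OF W x w] by simp
    then have "(SOME p. p \<in> cls W x w) \<in> cls W x w" by (rule someI)
    then obtain y v where yv: "(SOME p. p \<in> cls W x w) = (y, v)" "((x, w), (y, v)) \<in> Rel W"
      unfolding cls_def by (metis Image_singleton_iff prod.collapse)
    then show ?thesis unfolding \<Psi>_def using \<Phi>resp[OF yv(2)] by simp
  qed
  have \<Psi>V: "\<Psi> c \<in> rcar V" if c: "c \<in> rcar ?I" for c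
  proof -
    obtain x w where xw: "x \<in> PeE M e" "w \<in> rcar W" "c = cls W x w" using ind_elim[OF W c] by blast
    then show ?thesis using \<Psi>cls \<Phi>V by simp
  qed
  have \<Psi>0: "\<Psi> (rzero ?I) = rzero V"
    using \<Psi>cls[OF z_PeE rW_zero[OF W]] ind_zero[OF W] rM_zm[OF V \<phi>V[OF rW_zero[OF W]]] unfolding \<Phi>_def by simp
  have \<Psi>act: "\<Psi> (ract ?I m c) = ract V m (\<Psi> c)" if m: "m \<in> C" and c: "c \<in> rcar ?I" for m c
  proof -
    obtain x w where xw: "x \<in> PeE M e" "w \<in> rcar W" "c = cls W x w" using ind_elim[OF W c] by blast
    have xC: "x \<in> C" using PeE_C[OF xw(1)] .
    have l: "\<Psi> (ract ?I m c) = \<Phi> (pm m x) w" using act_cls[OF W m xw(1,2)] xw \<Psi>cls[OF pm_PeE[OF m xw(1)] xw(2)] by simp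
    have r: "ract V m (\<Psi> c) = ract V (m \<cdot> x) (\<phi> w)"
      using \<Psi>cls[OF xw(1,2)] xw(3) rM_comp[OF V m xC \<phi>V[OF xw(2)]] unfolding \<Phi>_def by simp
    show ?thesis
    proof (cases "m \<cdot> x \<in> JJ")
      case True then show ?thesis using l r unfolding \<Phi>_def by (simp add: pmul_eq)
    next
      case False
      have "m \<cdot> x \<in> Jideal M e"
      proof (cases "x = z")
        case True then show ?thesis using m Jideal_mul[of z e z] by simp
      next
        case False then have "x \<in> JJ" using xw(1) PeE_Lset Lset_def by auto
        then show ?thesis using JJ_iff Jideal_trans Jideal_mulL[OF m xC] by (meson cl eC m xC)
      qed
      then have "e \<notin> Jideal M (m \<cdot> x)" using notJ False m xC by simp
      then have "ract V (m \<cdot> x) (\<phi> w) = rzero V" using ann_zero[OF ann _ _ \<phi>V[OF xw(2)]] m xC by simp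
      moreover have "\<Phi> (pm m x) w = rzero V" using False rM_zm[OF V \<phi>V[OF xw(2)]] unfolding \<Phi>_def by (simp add: pmul_eq)
      ultimately show ?thesis using l r by simp
    qed
  qed
  obtain v0 where v0: "v0 \<in> rcar V" "ract V e v0 \<noteq> rzero V" using eV_nz[OF ann] by blast
  have \<Psi>N: "\<Psi> c = rzero V" if c: "c \<in> ?N" for c
  proof (rule ccontr)
    assume nz: "\<Psi> c \<noteq> rzero V"
    have cI: "c \<in> rcar ?I" using c unfolding Nset_def by simp
    obtain m where m: "m \<in> C" "v0 = ract V m (\<Psi> c)" using cyclic[OF sV \<Psi>V[OF cI] nz v0(1)] by blast
    have "ract V e v0 = ract V (e \<cdot> m) (\<Psi> c)" using m rM_comp[OF V eC m(1) \<Psi>V[OF cI]] by simp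
    also have "\<dots> = \<Psi> (ract ?I (e \<cdot> m) c)" using \<Psi>act[OF cl[OF eC m(1)] cI] by simp
    also have "\<dots> = \<Psi> (rzero ?I)" using c m unfolding Nset_def by simp
    also have "\<dots> = rzero V" using \<Psi>0 .
    finally show False using v0 by simp
  qed
  have QI: "rcar ?Q \<subseteq> rcar ?I" using Q_car[of W] rM_zero[OF Irep] by auto
  have \<Psi>Qact: "\<Psi> (ract ?Q m c) = ract V m (\<Psi> c)" if m: "m \<in> C" and c: "c \<in> rcar ?Q" for m c
  proof -
    have cI: "c \<in> rcar ?I" using c QI by blast
    show ?thesis
    proof (cases "ract ?I m c \<in> ?N")
      case True
      then have "ract V m (\<Psi> c) = rzero V" using \<Psi>act[OF m cI] \<Psi>N by simp
      then show ?thesis using True Q_act[of W m c] \<Psi>0 by simp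
    next
      case False then show ?thesis using Q_act[of W m c] \<Psi>act[OF m cI] by simp
    qed
  qed
  have \<Psi>Qnz: "\<Psi> c \<noteq> rzero V" if c: "c \<in> rcar ?Q" "c \<noteq> rzero ?I" for c
  proof
    assume z0: "\<Psi> c = rzero V"
    have cI: "c \<in> rcar ?I" and cN: "c \<notin> ?N" using c Q_car[of W] by auto
    then obtain m where m: "m \<in> C" "ract ?I (e \<cdot> m) c \<noteq> rzero ?I" unfolding Nset_def by blast
    obtain x w where xw: "x \<in> PeE M e" "w \<in> rcar W" "c = cls W x w" using ind_elim[OF W cI] by blast
    have emC: "e \<cdot> m \<in> C" using m by simp
    have eq1: "ract ?I (e \<cdot> m) c = cls W (pm (e \<cdot> m) x) w" using act_cls[OF W emC xw(1,2)] xw by simp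
    have nz1: "cls W (pm (e \<cdot> m) x) w \<noteq> cls W z (rzero W)" using m eq1 ind_zero[OF W] by simp
    have yL: "pm (e \<cdot> m) x \<in> Lset" and wnz: "w \<noteq> rzero W"
      using cls_nz[OF W pm_PeE[OF emC xw(1)] xw(2) nz1] by auto
    define y where "y = pm (e \<cdot> m) x"
    have ey: "e \<cdot> y = y"
    proof -
      have "y \<noteq> z" using Lset_nz yL y_def by simp
      then have "y = e \<cdot> m \<cdot> x" unfolding y_def by (simp add: pmul_eq split: if_splits)
      then show ?thesis using m xw PeE_C by (simp add: assoc)
    qed
    have yG: "y \<in> GJ M e" using GJ_iff yL ey unfolding y_def Lset_def by simp
    have "\<Psi> (ract ?I (e \<cdot> m) c) = ract V (e \<cdot> m) (\<Psi> c)" using \<Psi>act[OF emC cI] .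
    also have "\<dots> = rzero V" using z0 rM_z[OF V emC] by simp
    finally have "\<Phi> y w = rzero V" using eq1 \<Psi>cls[OF pm_PeE[OF emC xw(1)] xw(2)] y_def by simp
    moreover have "\<Phi> y w = \<phi> (ract W y w)" unfolding \<Phi>_def using \<phi>a[OF GJ_hat[OF yG] xw(2)] by simp
    ultimately show False using \<phi>nz[OF rW_clG[OF W yG xw(2)] rW_nz[OF W yG xw(2) wnz]] by simp
  qed
  have \<Psi>inj: "inj_on \<Psi> (rcar ?Q)"
  proof (rule inj_onI)
    fix c1 c2 assume c1: "c1 \<in> rcar ?Q" and c2: "c2 \<in> rcar ?Q" and eq: "\<Psi> c1 = \<Psi> c2"
    show "c1 = c2"
    proof (cases "\<Psi> c1 = rzero V")
      case True
      then have "c1 = rzero ?I" "c2 = rzero ?I" using \<Psi>Qnz c1 c2 eq by metis+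
      then show ?thesis by simp
    next
      case False
      have n1: "c1 \<noteq> rzero ?I" using False \<Psi>0 by auto
      have n2: "c2 \<noteq> rzero ?I" using False \<Psi>0 eq by auto
      have cI: "c1 \<in> rcar ?I" "c2 \<in> rcar ?I" using c1 c2 QI by auto
      obtain x w where xw: "x \<in> PeE M e" "w \<in> rcar W" "c1 = cls W x w" using ind_elim[OF W cI(1)] by blast
      obtain y v where yv: "y \<in> PeE M e" "v \<in> rcar W" "c2 = cls W y v" using ind_elim[OF W cI(2)] by blast
      have xL: "x \<in> Lset" and wnz: "w \<noteq> rzero W" using cls_nz[OF W xw(1,2)] n1 xw(3) ind_zero[OF W] by auto
      have yL: "y \<in> Lset" and vnz: "v \<noteq> rzero W" using cls_nz[OF W yv(1,2)] n2 yv(3) ind_zero[OF W] by auto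
      have xC: "x \<in> C" "y \<in> C" using xL yL Lset_C by auto
      obtain u where u: "u \<in> C" "u \<cdot> x = e" using L1 xL Lset_def by blast
      define u' where "u' = e \<cdot> u"
      have u'C: "u' \<in> C" using u u'_def by simp
      have u'x: "u' \<cdot> x = e" unfolding u'_def using u xC by (simp add: assoc)
      define \<alpha> where "\<alpha> = u' \<cdot> y"
      have \<alpha>C: "\<alpha> \<in> C" using u'C xC \<alpha>_def by simp
      have Pc1: "\<Psi> c1 = ract V x (\<phi> w)" using \<Psi>cls[OF xw(1,2)] xw(3) unfolding \<Phi>_def by simp
      have Pc2: "\<Psi> c2 = ract V y (\<phi> v)" using \<Psi>cls[OF yv(1,2)] yv(3) unfolding \<Phi>_def by simp
      have "ract V \<alpha> (\<phi> v) = ract V u' (\<Psi> c2)" unfolding \<alpha>_def using Pc2 rM_comp[OF V u'C xC(2) \<phi>V[OF yv(2)]] by simp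
      also have "\<dots> = ract V u' (\<Psi> c1)" using eq by simp
      also have "\<dots> = ract V e (\<phi> w)" using Pc1 rM_comp[OF V u'C xC(1) \<phi>V[OF xw(2)]] u'x by simp
      also have "\<dots> = \<phi> w" using \<phi>e[OF xw(2)] .
      finally have av: "ract V \<alpha> (\<phi> v) = \<phi> w" .
      have "\<alpha> \<notin> IJ M JJ"
      proof
        assume "\<alpha> \<in> IJ M JJ"
        then have "ract V \<alpha> (\<phi> v) = rzero V" using ann_zero[OF ann \<alpha>C _ \<phi>V[OF yv(2)]] IJ_iff by simp
        then show False using av \<phi>nz[OF xw(2) wnz] by simp
      qed
      then have "e \<in> Jideal M \<alpha>" using IJ_iff \<alpha>C by simp
      moreover have "\<alpha> \<in> Jideal M e"
      proof -
        have "\<alpha> \<in> Jideal M y" unfolding \<alpha>_def using Jideal_mulL[OF u'C xC(2)] .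
        moreover have "y \<in> Jideal M e" using yL Lset_def JJ_iff by simp
        ultimately show ?thesis using Jideal_trans[OF eC] by blast
      qed
      ultimately have \<alpha>J: "\<alpha> \<in> JJ" using JJ_iff \<alpha>C by simp
      have "e \<cdot> \<alpha> = \<alpha>" "\<alpha> \<cdot> e = \<alpha>" unfolding \<alpha>_def u'_def using u xC yL Lset_def by (simp_all add: assoc)
      then have \<alpha>G: "\<alpha> \<in> GJ M e" using \<alpha>J GJ_iff by simp
      have xaL: "x \<cdot> \<alpha> \<in> Lset" using Lset_GJ[OF xL \<alpha>G] .
      have "u' \<cdot> (x \<cdot> \<alpha>) = \<alpha>" using u'x xC \<alpha>C u'C GJ_le[OF \<alpha>G] by (simp flip: assoc)
      then have p1: "pm u' (x \<cdot> \<alpha>) = \<alpha>" using \<alpha>J by (simp add: pmul_eq)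
      have p2: "pm u' y = \<alpha>" unfolding \<alpha>_def using \<alpha>J \<alpha>_def by (simp add: pmul_eq)
      obtain g where g: "g \<in> G" "y = g \<cdot> (x \<cdot> \<alpha>)"
        using LIx[OF u'C Lset_PeE[OF xaL] yv(1)] p1 p2 zJ \<alpha>J by fastforce
      have gC: "g \<in> C" using GC g by simp
      have "\<phi> (ract W \<alpha> v) = \<phi> w" using \<phi>a[OF GJ_hat[OF \<alpha>G] yv(2)] av by simp
      then have wv: "ract W \<alpha> v = w" using \<phi>inj[OF rW_clG[OF W \<alpha>G yv(2)] xw(2)] by simp
      have eqc: "cls W (x \<cdot> \<alpha>) v = cls W x w"
        using Rel_gen1[OF W xL \<alpha>G yv(2)] wv cls_eq[OF W xw(1) Lset_PeE[OF xaL] xw(2) yv(2)] by simp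
      have "g \<cdot> (x \<cdot> \<alpha>) \<in> Lset" using Lset_G xaL g by simp
      then have pg: "pm g (x \<cdot> \<alpha>) = g \<cdot> (x \<cdot> \<alpha>)" using Lset_def pmul_eq by simp
      have "c2 = cls W (pm g (x \<cdot> \<alpha>)) v" using yv g pg by simp
      also have "\<dots> = ract ?I g (cls W (x \<cdot> \<alpha>) v)" using act_cls[OF W gC Lset_PeE[OF xaL] yv(2)] by simp
      also have "\<dots> = ract ?I g c1" using eqc xw by simp
      finally have c21: "c2 = ract ?I g c1" .
      have "ract V g (\<Psi> c1) = \<Psi> c1" using \<Psi>act[OF gC cI(1)] c21 eq by simp
      then have "g = one" using rM_free[OF V g(1) \<Psi>V[OF cI(1)] False] by simp
      then show ?thesis using c21 act_one[OF W cI(1)] by simp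
    qed
  qed
  have \<Psi>img: "\<Psi> ` rcar ?Q = rcar V"
  proof
    show "\<Psi> ` rcar ?Q \<subseteq> rcar V" using \<Psi>V QI by auto
  next
    show "rcar V \<subseteq> \<Psi> ` rcar ?Q"
    proof
      fix u assume u: "u \<in> rcar V"
      show "u \<in> \<Psi> ` rcar ?Q"
      proof (cases "u = rzero V")
        case True then show ?thesis using \<Psi>0 Q_car[of W] by auto
      next
        case False
        have ev0: "ract V e v0 \<in> rcar (res M e V)" using v0(1) unfolding res_simps by blast
        define w0 where "w0 = \<psi> (ract V e v0)"
        have w0W: "w0 \<in> rcar W" unfolding w0_def using morph_GJ_D1[OF ph(2)] ev0 by blast
        have pw0: "\<phi> w0 = ract V e v0" unfolding w0_def using ph(4) ev0 by blast
        obtain m where m: "m \<in> C" "u = ract V m (\<phi> w0)" using cyclic[OF sV \<phi>V[OF w0W] _ u] pw0 v0(2) by auto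
        have u2: "u = ract V (m \<cdot> e) (\<phi> w0)" using m rM_comp[OF V m(1) eC \<phi>V[OF w0W]] \<phi>e[OF w0W] by simp
        have meJ: "m \<cdot> e \<in> JJ"
        proof (rule ccontr)
          assume "m \<cdot> e \<notin> JJ"
          moreover have "m \<cdot> e \<in> Jideal M e" using Jideal_mulL[OF m(1) eC] .
          ultimately have "e \<notin> Jideal M (m \<cdot> e)" using notJ m by simp
          then have "u = rzero V" using u2 ann_zero[OF ann _ _ \<phi>V[OF w0W]] m by simp
          then show False using False by simp
        qed
        have meL: "m \<cdot> e \<in> Lset" unfolding Lset_def using meJ m by (simp add: assoc)
        define c where "c = cls W (m \<cdot> e) w0"
        have cI: "c \<in> rcar ?I" unfolding c_def using cls_in[OF W Lset_PeE[OF meL] w0W] .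
        have Pc: "\<Psi> c = u" unfolding c_def using \<Psi>cls[OF Lset_PeE[OF meL] w0W] u2 unfolding \<Phi>_def by simp
        have "c \<notin> ?N" using \<Psi>N Pc False by auto
        then have "c \<in> rcar ?Q" using cI Q_car[of W] by auto
        then show ?thesis using Pc by blast
      qed
    qed
  qed
  have mor: "morph_M M ?Q V \<Psi>"
  proof -
    have "vect_morph M ?Q V \<Psi>"
    proof (rule vect_morph_inj)
      show "\<forall>v\<in>rcar ?Q. \<Psi> v \<in> rcar V" using \<Psi>V QI by auto
      show "\<Psi> (rzero ?Q) = rzero V" using \<Psi>0 Q_zero[of W] by simp
      show "\<forall>g\<in>G. \<forall>v\<in>rcar ?Q. \<Psi> (ract ?Q g v) = ract V g (\<Psi> v)" using \<Psi>Qact GC by blast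
      show "inj_on \<Psi> (rcar ?Q)" using \<Psi>inj .
    qed
    then show ?thesis unfolding morph_M_def using \<Psi>Qact by blast
  qed
  have "bij_betw \<Psi> (rcar ?Q) (rcar V)" using \<Psi>inj \<Psi>img unfolding bij_betw_def by simp
  then show ?thesis using iso_M_bij[OF Q_rep[OF W] mor] by simp
qed

end

theorem theoremA:
  fixes M :: "'m lmonoid" and e :: 'm
  assumes "Glinear_monoid M" and "left_inductive M"
    and "idem M e" and "e \<noteq> mzer M"
  shows
    "(\<forall>V :: ('m, 'w) obj. simple_GJ M e V \<longrightarrow>
        rep_M M (ind M e V)
      \<and> subrep_M M (ind M e V) (Nset M e (ind M e V))
      \<and> Nset M e (ind M e V) \<noteq> rcar (ind M e V)
      \<and> (\<forall>S. subrep_M M (ind M e V) S \<and> S \<noteq> rcar (ind M e V) \<longrightarrow> S \<subseteq> Nset M e (ind M e V))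
      \<and> simple_M M (Qrep M e V)
      \<and> has_apex M (Qrep M e V) (Jclass M e)
      \<and> iso_GJ M e (res M e (Qrep M e V)) V)
   \<and> (\<forall>V :: ('m, 'v) obj. simple_M M V \<and> has_apex M V (Jclass M e) \<longrightarrow>
        simple_GJ M e (res M e V) \<and> iso_M M (Qrep M e (res M e V)) V)
   \<and> (\<forall>(V :: ('m, 'u) obj) (V' :: ('m, 'w) obj). simple_GJ M e V \<and> simple_GJ M e V' \<longrightarrow>
        (iso_M M (Qrep M e V) (Qrep M e V') \<longleftrightarrow> iso_GJ M e V V'))"
proof -
  interpret ctx M e using assms by unfold_locales
  have P1: "rep_M M (ind M e V)
      \<and> subrep_M M (ind M e V) (Nset M e (ind M e V))
      \<and> Nset M e (ind M e V) \<noteq> rcar (ind M e V)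
      \<and> (\<forall>S. subrep_M M (ind M e V) S \<and> S \<noteq> rcar (ind M e V) \<longrightarrow> S \<subseteq> Nset M e (ind M e V))
      \<and> simple_M M (Qrep M e V)
      \<and> has_apex M (Qrep M e V) (Jclass M e)
      \<and> iso_GJ M e (res M e (Qrep M e V)) V" if sV: "simple_GJ M e V" for V :: "('m, 'w) obj"
  proof -
    have W: "rep_GJ M e V" using sGJ_rep[OF sV] .
    show ?thesis
      using ind_rep[OF W] N_subrep[OF ind_rep[OF W]] N_ne[OF sV] N_max[OF sV] Q_simple[OF sV]
        Q_apex[OF sV] Q_res_iso[OF sV] unfolding JJ_def by blast
  qed
  have P2: "simple_GJ M e (res M e V) \<and> iso_M M (Qrep M e (res M e V)) V"
    if sV: "simple_M M V" and ap: "has_apex M V (Jclass M e)" for V :: "('m, 'v) obj"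
  proof -
    have ann: "Ann M V = IJ M JJ" using ap unfolding has_apex_def JJ_def by blast
    have s: "simple_GJ M e (res M e V)" using part2a[OF sV ann] .
    have W: "rep_GJ M e (res M e V)" using sGJ_rep[OF s] .
    show ?thesis using s partA[OF sV ann W iso_GJ_refl[OF W]] by blast
  qed
  have P3: "iso_M M (Qrep M e V) (Qrep M e V') \<longleftrightarrow> iso_GJ M e V V'"
    if sV: "simple_GJ M e V" and sV': "simple_GJ M e V'" for V :: "('m, 'u) obj" and V' :: "('m, 'w) obj"
  proof
    assume iso: "iso_M M (Qrep M e V) (Qrep M e V')"
    have a: "iso_GJ M e (res M e (Qrep M e V)) (res M e (Qrep M e V'))"
      using iso_M_res[OF Q_rep[OF sGJ_rep[OF sV]] Q_rep[OF sGJ_rep[OF sV']] iso] .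
    have b: "iso_GJ M e V (res M e (Qrep M e V))" using iso_GJ_sym[OF Q_res_iso[OF sV]] .
    have c: "iso_GJ M e (res M e (Qrep M e V')) V'" using Q_res_iso[OF sV'] .
    show "iso_GJ M e V V'" using iso_GJ_trans[OF iso_GJ_trans[OF b a] c] .
  next
    assume iso: "iso_GJ M e V V'"
    have ann: "Ann M (Qrep M e V') = IJ M JJ" using Q_apex[OF sV'] unfolding has_apex_def by blast
    have i2: "iso_GJ M e V (res M e (Qrep M e V'))"
      using iso_GJ_trans[OF iso iso_GJ_sym[OF Q_res_iso[OF sV']]] .
    show "iso_M M (Qrep M e V) (Qrep M e V')"
      using partA[OF Q_simple[OF sV'] ann sGJ_rep[OF sV] i2] .
  qed
  show ?thesis using P1 P2 P3 by blast
qed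

end
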